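(* Assume condition (C) below holds. Then for every $\boldsymbol\theta\in\boldsymbol\Theta$ and all $a,b>0$, the test $(\hat T,\hat D)$ satisfies $\mathrm P_{\boldsymbol\theta}(\hat T<\infty)=1$, $$\mathrm P_{\boldsymbol\theta}(\hat D\setminus A(\boldsymbol\theta)\ne\emptyset)\le 1/a,\qquad \mathrm P_{\boldsymbol\theta}(A(\boldsymbol\theta)\setminus\hat D\ne\emptyset)\le 1/b.$$ In particular, $(\hat T,\hat D)\in\Delta(\alpha,\beta)$ when $a=1/\alpha$ and $b=1/\beta$, for any $\alpha,\beta\in(0,1)$.
   Context: Setting: $K\ge1$ mutually independent data streams $\{X_k(n),n\ge1\}$, $k\in[K]$, each i.i.d. with density $f_{\theta_k}$ w.r.t. a $\sigma$-finite measure $\nu$, $\{f_\theta:\theta\in\Theta\}$ a parametric family, $\Theta=\Theta^0\cup\Theta^1$ with $\Theta^0,\Theta^1$ nonempty disjoint (noise/signal parameters). $I(\theta,\theta')=\int f_\theta\log(f_\theta/f_{\theta'})d\nu$; standing assumption $\inf_{\theta\in\Theta^1}I(\theta^0,\theta)>0$ for all $\theta^0\in\Theta^0$ and $\inf_{\theta\in\Theta^0}I(\theta^1,\theta)>0$ for all $\theta^1\in\Theta^1$. $\boldsymbol\Theta=\{\boldsymbol\theta\in\Theta^K:\exists\theta^0\in\Theta^0,\theta^1\in\Theta^1$ with $\theta_k=\theta^0$ whenever $\theta_k\in\Theta^0$ and $\theta_k=\theta^1$ whenever $\theta_k\in\Theta^1\}$. $\mathrm P_{\boldsymbol\theta}$: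 stream $k$ has density $f_{\theta_k}$. $I(\boldsymbol\theta,\boldsymbol\theta')=\sum_kI(\theta_k,\theta_k')$. $A(\boldsymbol\theta)=\{k:\theta_k\in\Theta^1\}$. $\mathcal F(n)=\sigma(X_k(t):t\le n,k\in[K])$; a test is $(T,D)$ with $T$ a stopping time and $D\subseteq[K]$ $\mathcal F(T)$-measurable; $\Delta(\alpha,\beta)$ = tests with, for all $\boldsymbol\theta\in\boldsymbol\Theta$, $\mathrm P_{\boldsymbol\theta}(T<\infty)=1$, $\mathrm P_{\boldsymbol\theta}(D\setminus A(\boldsymbol\theta)\neq\emptyset)\le\alpha$, $\mathrm P_{\boldsymbol\theta}(A(\boldsymbol\theta)\setminus D\ne\emptyset)\le\beta$. $I^0(\boldsymbol\theta)=\inf\{I(\boldsymbol\theta,\boldsymbol\theta'):\boldsymbol\theta'\in\boldsymbol\Theta, A(\boldsymbol\theta')\setminus A(\boldsymbol\theta)\ne\emptyset\}$, $I^1(\boldsymbol\theta)=\inf\{I(\boldsymbol\theta,\boldsymbol\theta'):\boldsymbol\theta'\in\boldsymbol\Theta, A(\boldsymbol\theta)\setminus A(\boldsymbol\theta')\ne\emptyset\}$, $\inf\emptyset=+\infty$. The procedure: $L_k(n;\theta)=\prod_{t=1}^nf_\theta(X_k(t))$; $\boldsymbol L(n;\boldsymbol\theta')=\prod_kL_k(n;\theta'_k)$; $L_k^i(n)=\sup_{\theta\in\Theta^i}L_k(n;\theta)$, $i=0,1$. $\hat\theta_k(n)\in\Theta$ is a (near-)MLE: $L_k(n;\hat\theta_k(n))\ge\sup_{\theta\in\Theta}L_k(n;\theta)-1/n$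 (an exact maximizer if it exists), $\hat\theta_k(0)\in\Theta$ arbitrary. Adaptive joint likelihood: $\hat{\boldsymbol L}(0)=1$, $\hat{\boldsymbol L}(n)=\hat{\boldsymbol L}(n-1)\prod_{k}f_{\hat\theta_k(n-1)}(X_k(n))$. $\hat A(n)=\{k:L_k^1(n)\ge L_k^0(n)\}$. $\boldsymbol L^0(n)=\sup\{\boldsymbol L(n;\boldsymbol\theta'):\boldsymbol\theta'\in\boldsymbol\Theta, A(\boldsymbol\theta')\setminus\hat A(n)\neq\emptyset\}$, $\boldsymbol L^1(n)=\sup\{\boldsymbol L(n;\boldsymbol\theta'):\boldsymbol\theta'\in\boldsymbol\Theta,\hat A(n)\setminus A(\boldsymbol\theta')\ne\emptyset\}$ (supremum of empty set is $0$, and $x/0=+\infty$ for $x>0$). For thresholds $a,b>0$: $\hat T=\inf\{n\ge1:\hat{\boldsymbol L}(n)/\boldsymbol L^0(n)\ge b\text{ and }\hat{\boldsymbol L}(n)/\boldsymbol L^1(n)\ge a\}$, $\hat D=\hat A(\hat T)$. Condition (C): for every $\boldsymbol\theta\in\boldsymbol\Theta$, $\epsilon>0$, $i\in\{0,1\}$: $\sum_{n\ge1}\mathrm P_{\boldsymbol\theta}\big(\tfrac1n\log\frac{\hat{\boldsymbol L}(n)}{\boldsymbol L^i(n)}\le I^i(\boldsymbol\theta)-\epsilon\big)<\infty$. *)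

theory Defs
  imports "HOL-Probability.Probability"
begin

text \<open>Streams are indexed by k < K; time by n (observations at n >= 1).
  A sample point is omega :: nat * nat => 's, omega (k,n) = X_k(n).
  Parameters have type 'p; Theta = Th0 \<union> Th1; N is the base measure nu on the
  observation space; f theta is the density of f_theta w.r.t. N.\<close>

definition bTheta :: "nat \<Rightarrow> 'p set \<Rightarrow> 'p set \<Rightarrow> (nat \<Rightarrow> 'p) set" where
  "bTheta K Th0 Th1 = {th \<in> {..<K} \<rightarrow>\<^sub>E (Th0 \<union> Th1).
      \<exists>t0\<in>Th0. \<exists>t1\<in>Th1. \<forall>k<K. (th k \<in> Th0 \<longrightarrow> th k = t0) \<and> (th k \<in> Th1 \<longrightarrow> th k = t1)}"

definition sigA :: "nat \<Rightarrow> 'p set \<Rightarrow> (nat \<Rightarrow> 'p) \<Rightarrow> nat set" where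
  "sigA K Th1 th = {k. k < K \<and> th k \<in> Th1}"

text \<open>Kullback-Leibler divergence I(theta,theta') = int f_theta log(f_theta/f_theta') dnu,
  with conventions 0 log(0/y) = 0 and x log(x/0) = +infinity for x > 0;
  the integral is positive part minus negative part (the latter is always finite).\<close>
definition KLint :: "('p \<Rightarrow> 's \<Rightarrow> real) \<Rightarrow> 'p \<Rightarrow> 'p \<Rightarrow> 's \<Rightarrow> ereal" where
  "KLint f t t' x = (if f t x = 0 then 0 else if f t' x = 0 then \<infinity>
                     else ereal (f t x * ln (f t x / f t' x)))"

definition KL :: "'s measure \<Rightarrow> ('p \<Rightarrow> 's \<Rightarrow> real) \<Rightarrow> 'p \<Rightarrow> 'p \<Rightarrow> ereal" where
  "KL N f t t' = enn2ereal (\<integral>\<^sup>+ x. e2ennreal (max 0 (KLint f t t' x)) \<partial>N)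
                - enn2ereal (\<integral>\<^sup>+ x. e2ennreal (max 0 (- KLint f t t' x)) \<partial>N)"

definition bKL :: "nat \<Rightarrow> 's measure \<Rightarrow> ('p \<Rightarrow> 's \<Rightarrow> real) \<Rightarrow> (nat \<Rightarrow> 'p) \<Rightarrow> (nat \<Rightarrow> 'p) \<Rightarrow> ereal" where
  "bKL K N f th th' = (\<Sum>k<K. KL N f (th k) (th' k))"

definition I0 :: "nat \<Rightarrow> 'p set \<Rightarrow> 'p set \<Rightarrow> 's measure \<Rightarrow> ('p \<Rightarrow> 's \<Rightarrow> real) \<Rightarrow> (nat \<Rightarrow> 'p) \<Rightarrow> ereal" where
  "I0 K Th0 Th1 N f th = (INF th' \<in> {th' \<in> bTheta K Th0 Th1. sigA K Th1 th' - sigA K Th1 th \<noteq> {}}.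
                           bKL K N f th th')"

definition I1 :: "nat \<Rightarrow> 'p set \<Rightarrow> 'p set \<Rightarrow> 's measure \<Rightarrow> ('p \<Rightarrow> 's \<Rightarrow> real) \<Rightarrow> (nat \<Rightarrow> 'p) \<Rightarrow> ereal" where
  "I1 K Th0 Th1 N f th = (INF th' \<in> {th' \<in> bTheta K Th0 Th1. sigA K Th1 th - sigA K Th1 th' \<noteq> {}}.
                           bKL K N f th th')"

definition Omega :: "nat \<Rightarrow> 's measure \<Rightarrow> (nat \<times> nat \<Rightarrow> 's) measure" where
  "Omega K N = (\<Pi>\<^sub>M kn \<in> {..<K} \<times> UNIV. N)"

definition Pth :: "nat \<Rightarrow> 's measure \<Rightarrow> ('p \<Rightarrow> 's \<Rightarrow> real) \<Rightarrow> (nat \<Rightarrow> 'p) \<Rightarrow> (nat \<times> nat \<Rightarrow> 's) measure" where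
  "Pth K N f th = (\<Pi>\<^sub>M kn \<in> {..<K} \<times> UNIV. density N (\<lambda>x. ennreal (f (th (fst kn)) x)))"

definition Lk :: "('p \<Rightarrow> 's \<Rightarrow> real) \<Rightarrow> nat \<Rightarrow> nat \<Rightarrow> 'p \<Rightarrow> (nat \<times> nat \<Rightarrow> 's) \<Rightarrow> real" where
  "Lk f k n t \<omega> = (\<Prod>s\<in>{1..n}. f t (\<omega> (k, s)))"

definition bL :: "nat \<Rightarrow> ('p \<Rightarrow> 's \<Rightarrow> real) \<Rightarrow> nat \<Rightarrow> (nat \<Rightarrow> 'p) \<Rightarrow> (nat \<times> nat \<Rightarrow> 's) \<Rightarrow> real" where
  "bL K f n th \<omega> = (\<Prod>k<K. Lk f k n (th k) \<omega>)"

definition Lsup :: "('p \<Rightarrow> 's \<Rightarrow> real) \<Rightarrow> 'p set \<Rightarrow> nat \<Rightarrow> nat \<Rightarrow> (nat \<times> nat \<Rightarrow> 's) \<Rightarrow> ennreal" where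
  "Lsup f Th k n \<omega> = (SUP t \<in> Th. ennreal (Lk f k n t \<omega>))"

text \<open>Adaptive joint likelihood; thh k n omega is the estimator theta-hat_k(n).\<close>
definition Lhat :: "nat \<Rightarrow> ('p \<Rightarrow> 's \<Rightarrow> real) \<Rightarrow> (nat \<Rightarrow> nat \<Rightarrow> (nat \<times> nat \<Rightarrow> 's) \<Rightarrow> 'p)
                    \<Rightarrow> nat \<Rightarrow> (nat \<times> nat \<Rightarrow> 's) \<Rightarrow> real" where
  "Lhat K f thh n \<omega> = (\<Prod>s\<in>{1..n}. \<Prod>k<K. f (thh k (s - 1) \<omega>) (\<omega> (k, s)))"

definition Ahat :: "nat \<Rightarrow> 'p set \<Rightarrow> 'p set \<Rightarrow> ('p \<Rightarrow> 's \<Rightarrow> real) \<Rightarrow> nat \<Rightarrow> (nat \<times> nat \<Rightarrow> 's) \<Rightarrow> nat set" where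
  "Ahat K Th0 Th1 f n \<omega> = {k. k < K \<and> Lsup f Th0 k n \<omega> \<le> Lsup f Th1 k n \<omega>}"

definition LL0 :: "nat \<Rightarrow> 'p set \<Rightarrow> 'p set \<Rightarrow> ('p \<Rightarrow> 's \<Rightarrow> real) \<Rightarrow> nat \<Rightarrow> (nat \<times> nat \<Rightarrow> 's) \<Rightarrow> ennreal" where
  "LL0 K Th0 Th1 f n \<omega> = (SUP th' \<in> {th' \<in> bTheta K Th0 Th1. sigA K Th1 th' - Ahat K Th0 Th1 f n \<omega> \<noteq> {}}.
                           ennreal (bL K f n th' \<omega>))"

definition LL1 :: "nat \<Rightarrow> 'p set \<Rightarrow> 'p set \<Rightarrow> ('p \<Rightarrow> 's \<Rightarrow> real) \<Rightarrow> nat \<Rightarrow> (nat \<times> nat \<Rightarrow> 's) \<Rightarrow> ennreal" where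
  "LL1 K Th0 Th1 f n \<omega> = (SUP th' \<in> {th' \<in> bTheta K Th0 Th1. Ahat K Th0 Th1 f n \<omega> - sigA K Th1 th' \<noteq> {}}.
                           ennreal (bL K f n th' \<omega>))"

text \<open>Stopping condition; ennreal division gives x/0 = infinity for x > 0.\<close>
definition stopcond where
  "stopcond K Th0 Th1 f thh a b n \<omega> \<longleftrightarrow>
     ennreal b \<le> ennreal (Lhat K f thh n \<omega>) / LL0 K Th0 Th1 f n \<omega> \<and>
     ennreal a \<le> ennreal (Lhat K f thh n \<omega>) / LL1 K Th0 Th1 f n \<omega>"

definition That :: "nat \<Rightarrow> 'p set \<Rightarrow> 'p set \<Rightarrow> ('p \<Rightarrow> 's \<Rightarrow> real) \<Rightarrow> (nat \<Rightarrow> nat \<Rightarrow> (nat \<times> nat \<Rightarrow> 's) \<Rightarrow> 'p)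
                     \<Rightarrow> real \<Rightarrow> real \<Rightarrow> (nat \<times> nat \<Rightarrow> 's) \<Rightarrow> enat" where
  "That K Th0 Th1 f thh a b \<omega> =
     (if \<exists>n\<ge>1. stopcond K Th0 Th1 f thh a b n \<omega>
      then enat (LEAST n. n \<ge> 1 \<and> stopcond K Th0 Th1 f thh a b n \<omega>) else \<infinity>)"

definition Dhat :: "nat \<Rightarrow> 'p set \<Rightarrow> 'p set \<Rightarrow> ('p \<Rightarrow> 's \<Rightarrow> real) \<Rightarrow> (nat \<Rightarrow> nat \<Rightarrow> (nat \<times> nat \<Rightarrow> 's) \<Rightarrow> 'p)
                     \<Rightarrow> real \<Rightarrow> real \<Rightarrow> (nat \<times> nat \<Rightarrow> 's) \<Rightarrow> nat set" where
  "Dhat K Th0 Th1 f thh a b \<omega> = Ahat K Th0 Th1 f (the_enat (That K Th0 Th1 f thh a b \<omega>)) \<omega>"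

text \<open>theta-hat is an adapted (near-)MLE: theta-hat_k(n) lies in Theta, is F(n)-measurable
  (measurable and depending only on X_j(t), j<K, t<=n), and maximizes the likelihood up to 1/n
  (exactly, if a maximizer exists).\<close>
definition near_mle where
  "near_mle K Th0 Th1 N Pm f thh \<longleftrightarrow>
    (\<forall>k<K. \<forall>n. thh k n \<in> measurable (Omega K N) Pm \<and>
       (\<forall>\<omega>\<in>space (Omega K N). \<forall>\<omega>'\<in>space (Omega K N).
          (\<forall>j<K. \<forall>t\<in>{1..n}. \<omega>' (j, t) = \<omega> (j, t)) \<longrightarrow> thh k n \<omega>' = thh k n \<omega>) \<and>
       (\<forall>\<omega>\<in>space (Omega K N). thh k n \<omega> \<in> Th0 \<union> Th1 \<and>
          (n \<ge> 1 \<longrightarrow>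
             ennreal (Lk f k n (thh k n \<omega>) \<omega>) \<ge> Lsup f (Th0 \<union> Th1) k n \<omega> - ennreal (1 / real n) \<and>
             ((\<exists>t\<in>Th0 \<union> Th1. ennreal (Lk f k n t \<omega>) = Lsup f (Th0 \<union> Th1) k n \<omega>) \<longrightarrow>
                ennreal (Lk f k n (thh k n \<omega>) \<omega>) = Lsup f (Th0 \<union> Th1) k n \<omega>))))"

text \<open>Condition (C).  (1/n) log x \<le> I - eps is written as x \<le> exp(n (I - eps)); the threshold
  c = I - eps ranges over all reals below I (all reals if I = infinity).  Probabilities of
  possibly non-measurable events are outer probabilities.\<close>
definition condC where
  "condC K Th0 Th1 N f thh \<longleftrightarrow>
    (\<forall>th\<in>bTheta K Th0 Th1. \<forall>c::real.
      (ereal c < I0 K Th0 Th1 N f th \<longrightarrow>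
        (\<Sum>n. outer_measure_of (Pth K N f th)
           {\<omega>\<in>space (Pth K N f th). ennreal (Lhat K f thh (Suc n) \<omega>) / LL0 K Th0 Th1 f (Suc n) \<omega>
                                     \<le> ennreal (exp (real (Suc n) * c))}) < \<infinity>) \<and>
      (ereal c < I1 K Th0 Th1 N f th \<longrightarrow>
        (\<Sum>n. outer_measure_of (Pth K N f th)
           {\<omega>\<in>space (Pth K N f th). ennreal (Lhat K f thh (Suc n) \<omega>) / LL1 K Th0 Th1 f (Suc n) \<omega>
                                     \<le> ennreal (exp (real (Suc n) * c))}) < \<infinity>))"

text \<open>The class Delta(alpha,beta).  T is a stopping time and D is F(T)-measurable, expressed as:
  the events {T = n} and the value of D on {T = n} are determined by X_j(t), j<K, t<=n.\<close>
definition in_Delta where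
  "in_Delta K Th0 Th1 N f T D \<alpha> \<beta> \<longleftrightarrow>
    (\<forall>\<omega>\<in>space (Omega K N). D \<omega> \<subseteq> {..<K}) \<and>
    (\<forall>n. \<forall>\<omega>\<in>space (Omega K N). \<forall>\<omega>'\<in>space (Omega K N).
        (\<forall>j<K. \<forall>t\<in>{1..n}. \<omega>' (j, t) = \<omega> (j, t)) \<longrightarrow>
        (T \<omega> = enat n \<longleftrightarrow> T \<omega>' = enat n) \<and> (T \<omega> = enat n \<longrightarrow> D \<omega> = D \<omega>')) \<and>
    (\<forall>th\<in>bTheta K Th0 Th1.
       (AE \<omega> in Pth K N f th. T \<omega> < \<infinity>) \<and>
       outer_measure_of (Pth K N f th)
          {\<omega>\<in>space (Pth K N f th). T \<omega> < \<infinity> \<and> D \<omega> - sigA K Th1 th \<noteq> {}} \<le> ennreal \<alpha> \<and>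
       outer_measure_of (Pth K N f th)
          {\<omega>\<in>space (Pth K N f th). T \<omega> < \<infinity> \<and> sigA K Th1 th - D \<omega> \<noteq> {}} \<le> ennreal \<beta>)"

end

theory Submission
  imports Defs
begin

lemma single_coord:
  fixes M :: "'i \<Rightarrow> 'a measure" and h :: "('i \<Rightarrow> 'a) \<Rightarrow> 'a \<Rightarrow> ennreal"
  assumes prob: "\<And>j. j \<in> I \<Longrightarrow> prob_space (M j)" and i: "i \<in> I"
    and hm: "(\<lambda>(w, y). h w y) \<in> borel_measurable (PiM I M \<Otimes>\<^sub>M M i)"
    and inv: "\<And>w z y. w \<in> space (PiM I M) \<Longrightarrow> z \<in> space (M i) \<Longrightarrow> h (w(i := z)) y = h w y"
  shows "(\<integral>\<^sup>+w. h w (w i) \<partial>PiM I M) = (\<integral>\<^sup>+w. (\<integral>\<^sup>+y. h w y \<partial>M i) \<partial>PiM I M)"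
proof -
  define I' where "I' = I - {i}"
  have II: "insert i I' = I" using i by (auto simp: I'_def)
  interpret Mi: prob_space "M i" using prob i by auto
  interpret PI': prob_space "PiM I' M" using prob by (intro prob_space_PiM) (auto simp: I'_def)
  interpret PI: prob_space "PiM I M" using prob by (intro prob_space_PiM) auto
  interpret pr: pair_sigma_finite "M i" "PiM I' M" by unfold_locales
  have D: "distr (M i \<Otimes>\<^sub>M PiM I' M) (PiM I M) (\<lambda>(x, X). X(i := x)) = PiM I M"
    using distr_pair_PiM_eq_PiM[of I' M i] prob II by (auto simp: I'_def)
  have mupd: "(\<lambda>(x, X). X(i := x)) \<in> measurable (M i \<Otimes>\<^sub>M PiM I' M) (PiM I M)"
  proof -
    have "(\<lambda>(x, X). X(i := x)) \<in> measurable (M i \<Otimes>\<^sub>M PiM I' M) (PiM (insert i I') M)"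
    proof (rule measurable_PiM_single')
      fix j assume j: "j \<in> insert i I'"
      show "(\<lambda>p. (case p of (x, X) \<Rightarrow> X(i := x)) j) \<in> measurable (M i \<Otimes>\<^sub>M PiM I' M) (M j)"
      proof (cases "j = i")
        case True then show ?thesis by (simp add: split_beta)
      next
        case False then have "j \<in> I'" using j by auto
        then show ?thesis using False by (simp add: split_beta)
      qed
    qed (auto simp: space_pair_measure space_PiM PiE_iff split: if_splits)
    then show ?thesis using II by simp
  qed
  have m1: "(\<lambda>w. h w (w i)) \<in> borel_measurable (PiM I M)"
  proof -
    have "(\<lambda>w. (w, w i)) \<in> measurable (PiM I M) (PiM I M \<Otimes>\<^sub>M M i)"
      using i by measurable
    from measurable_comp[OF this hm] show ?thesis by (simp add: comp_def)
  qed
  have m2: "(\<lambda>w. \<integral>\<^sup>+y. h w y \<partial>M i) \<in> borel_measurable (PiM I M)"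
    using Mi.borel_measurable_nn_integral[OF hm] .
  have eq: "(\<integral>\<^sup>+y. h (X(i := x)) y \<partial>M i) = (\<integral>\<^sup>+y. h (X(i := y)) y \<partial>M i)"
    if X: "X \<in> space (PiM I' M)" and x: "x \<in> space (M i)" for X x
  proof (rule nn_integral_cong)
    fix y assume y: "y \<in> space (M i)"
    have sp: "X(i := y) \<in> space (PiM I M)"
      using X y II i by (auto simp: space_PiM PiE_iff I'_def extensional_def split: if_splits)
    have "h ((X(i := y))(i := x)) y = h (X(i := y)) y" using inv[OF sp x] .
    then show "h (X(i := x)) y = h (X(i := y)) y" by simp
  qed
  have "(\<integral>\<^sup>+w. h w (w i) \<partial>PiM I M) = (\<integral>\<^sup>+p. h ((\<lambda>(x, X). X(i := x)) p) (fst p) \<partial>(M i \<Otimes>\<^sub>M PiM I' M))"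
    apply (subst D[symmetric])
    apply (subst nn_integral_distr[OF mupd])
    using m1 D apply simp
    by (auto intro!: nn_integral_cong simp: split_beta)
  also have "\<dots> = (\<integral>\<^sup>+X. \<integral>\<^sup>+x. h (X(i := x)) x \<partial>M i \<partial>PiM I' M)"
  proof -
    have mm: "(\<lambda>p. h ((\<lambda>(x, X). X(i := x)) p) (fst p)) \<in> borel_measurable (M i \<Otimes>\<^sub>M PiM I' M)"
      using measurable_comp[OF mupd m1] by (simp add: comp_def split_beta)
    show ?thesis
      using pr.Fubini'[of "\<lambda>x X. h (X(i := x)) x"] mm
      by (simp add: pr.nn_integral_snd[symmetric] split_beta)
  qed
  also have "\<dots> = (\<integral>\<^sup>+X. \<integral>\<^sup>+x. (\<integral>\<^sup>+y. h (X(i := x)) y \<partial>M i) \<partial>M i \<partial>PiM I' M)"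
  proof (rule nn_integral_cong)
    fix X assume X: "X \<in> space (PiM I' M)"
    have "(\<integral>\<^sup>+x. (\<integral>\<^sup>+y. h (X(i := x)) y \<partial>M i) \<partial>M i) = (\<integral>\<^sup>+x. (\<integral>\<^sup>+y. h (X(i := y)) y \<partial>M i) \<partial>M i)"
      by (rule nn_integral_cong) (rule eq[OF X])
    also have "\<dots> = (\<integral>\<^sup>+y. h (X(i := y)) y \<partial>M i)"
      by (simp add: Mi.emeasure_space_1)
    finally show "(\<integral>\<^sup>+x. h (X(i := x)) x \<partial>M i) = (\<integral>\<^sup>+x. (\<integral>\<^sup>+y. h (X(i := x)) y \<partial>M i) \<partial>M i)"
      by simp
  qed
  also have "\<dots> = (\<integral>\<^sup>+p. (\<lambda>w. \<integral>\<^sup>+y. h w y \<partial>M i) ((\<lambda>(x, X). X(i := x)) p) \<partial>(M i \<Otimes>\<^sub>M PiM I' M))"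
  proof -
    have mm: "(\<lambda>p. (\<lambda>w. \<integral>\<^sup>+y. h w y \<partial>M i) ((\<lambda>(x, X). X(i := x)) p)) \<in> borel_measurable (M i \<Otimes>\<^sub>M PiM I' M)"
      using measurable_comp[OF mupd m2] by (simp add: comp_def)
    show ?thesis
      using pr.Fubini'[of "\<lambda>x X. \<integral>\<^sup>+y. h (X(i := x)) y \<partial>M i"] mm
      by (simp add: pr.nn_integral_snd[symmetric] split_beta)
  qed
  also have "\<dots> = (\<integral>\<^sup>+w. (\<integral>\<^sup>+y. h w y \<partial>M i) \<partial>distr (M i \<Otimes>\<^sub>M PiM I' M) (PiM I M) (\<lambda>(x, X). X(i := x)))"
    using m2 D by (subst nn_integral_distr[OF mupd]) simp_all
  also have "\<dots> = (\<integral>\<^sup>+w. (\<integral>\<^sup>+y. h w y \<partial>M i) \<partial>PiM I M)"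
    by (simp only: D)
  finally show ?thesis .
qed


locale setting =
  fixes K :: nat and Th0 Th1 :: "'p set" and N :: "'s measure" and Pm :: "'p measure"
    and f :: "'p \<Rightarrow> 's \<Rightarrow> real"
    and thh :: "nat \<Rightarrow> nat \<Rightarrow> (nat \<times> nat \<Rightarrow> 's) \<Rightarrow> 'p"
  assumes dens: "\<And>t. t \<in> Th0 \<union> Th1 \<Longrightarrow> f t \<in> borel_measurable N \<and> (\<forall>x\<in>space N. f t x \<ge> 0)
                       \<and> (\<integral>\<^sup>+ x. ennreal (f t x) \<partial>N) = 1"
    and fmeas: "(\<lambda>(t, x). f t x) \<in> borel_measurable (Pm \<Otimes>\<^sub>M N)"
    and mle: "near_mle K Th0 Th1 N Pm f thh"
begin

lemma f_meas: "t \<in> Th0 \<union> Th1 \<Longrightarrow> f t \<in> borel_measurable N" using dens by blast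
lemma f_nonneg: "t \<in> Th0 \<union> Th1 \<Longrightarrow> x \<in> space N \<Longrightarrow> f t x \<ge> 0" using dens by blast
lemma f_int: "t \<in> Th0 \<union> Th1 \<Longrightarrow> (\<integral>\<^sup>+ x. ennreal (f t x) \<partial>N) = 1" using dens by blast

lemma space_Omega: "space (Omega K N) = ({..<K} \<times> UNIV) \<rightarrow>\<^sub>E space N"
  by (simp add: Omega_def space_PiM)

lemma thh_meas: "k < K \<Longrightarrow> thh k n \<in> measurable (Omega K N) Pm"
  using mle unfolding near_mle_def by blast
lemma thh_dep: "k < K \<Longrightarrow> w \<in> space (Omega K N) \<Longrightarrow> w' \<in> space (Omega K N) \<Longrightarrow>
    (\<forall>j<K. \<forall>t\<in>{1..n}. w' (j, t) = w (j, t)) \<Longrightarrow> thh k n w' = thh k n w"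
  using mle unfolding near_mle_def by blast
lemma thh_in: "k < K \<Longrightarrow> w \<in> space (Omega K N) \<Longrightarrow> thh k n w \<in> Th0 \<union> Th1"
  using mle unfolding near_mle_def by blast

lemma Omega_comp: "w \<in> space (Omega K N) \<Longrightarrow> j < K \<Longrightarrow> w (j, s) \<in> space N"
  by (auto simp: space_Omega)

lemma bTheta_in: "th \<in> bTheta K Th0 Th1 \<Longrightarrow> k < K \<Longrightarrow> th k \<in> Th0 \<union> Th1"
  by (auto simp: bTheta_def)

lemma prob_dens: "t \<in> Th0 \<union> Th1 \<Longrightarrow> prob_space (density N (\<lambda>x. ennreal (f t x)))"
proof (rule prob_spaceI)
  assume t: "t \<in> Th0 \<union> Th1"
  have "emeasure (density N (\<lambda>x. ennreal (f t x))) (space N) = (\<integral>\<^sup>+ x. ennreal (f t x) * indicator (space N) x \<partial>N)"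
    using f_meas[OF t] by (subst emeasure_density) auto
  also have "\<dots> = (\<integral>\<^sup>+ x. ennreal (f t x) \<partial>N)"
    by (rule nn_integral_cong) auto
  finally show "emeasure (density N (\<lambda>x. ennreal (f t x))) (space (density N (\<lambda>x. ennreal (f t x)))) = 1"
    using f_int[OF t] by simp
qed

lemma prob_Pth: "th \<in> bTheta K Th0 Th1 \<Longrightarrow> prob_space (Pth K N f th)"
  unfolding Pth_def
proof (rule prob_space_PiM)
  fix i assume "th \<in> bTheta K Th0 Th1" "i \<in> {..<K} \<times> (UNIV :: nat set)"
  then have "th (fst i) \<in> Th0 \<union> Th1" by (intro bTheta_in) auto
  then show "prob_space (density N (\<lambda>x. ennreal (f (th (fst i)) x)))" by (rule prob_dens)
qed

lemma sets_Pth: "sets (Pth K N f th) = sets (Omega K N)"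
  unfolding Pth_def Omega_def by (rule sets_PiM_cong) auto

lemma space_Pth: "space (Pth K N f th) = space (Omega K N)"
  using sets_Pth sets_eq_imp_space_eq by blast

lemma meas_comp_Omega: "j < K \<Longrightarrow> (\<lambda>w. w (j, s)) \<in> measurable (Omega K N) N"
  unfolding Omega_def by (rule measurable_component_singleton) auto

lemma meas_fthh: "k < K \<Longrightarrow> j < K \<Longrightarrow> (\<lambda>w. f (thh k n w) (w (j, s))) \<in> borel_measurable (Omega K N)"
proof -
  assume k: "k < K" and j: "j < K"
  have "(\<lambda>w. (thh k n w, w (j, s))) \<in> measurable (Omega K N) (Pm \<Otimes>\<^sub>M N)"
    using thh_meas[OF k] meas_comp_Omega[OF j] by (rule measurable_Pair)
  from measurable_comp[OF this fmeas] show ?thesis by (simp add: comp_def)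
qed

lemma meas_Lhat: "(\<lambda>w. Lhat K f thh n w) \<in> borel_measurable (Omega K N)"
  unfolding Lhat_def
  by (intro borel_measurable_prod meas_fthh) auto

lemma meas_bL: "th \<in> bTheta K Th0 Th1 \<Longrightarrow> (\<lambda>w. bL K f n th w) \<in> borel_measurable (Omega K N)"
  unfolding bL_def Lk_def
  by (intro borel_measurable_prod measurable_comp[OF meas_comp_Omega f_meas, unfolded comp_def] bTheta_in) auto

lemma Lhat_nonneg: "w \<in> space (Omega K N) \<Longrightarrow> Lhat K f thh n w \<ge> 0"
  unfolding Lhat_def by (intro prod_nonneg ballI f_nonneg thh_in Omega_comp) auto

lemma bL_nonneg: "th \<in> bTheta K Th0 Th1 \<Longrightarrow> w \<in> space (Omega K N) \<Longrightarrow> bL K f n th w \<ge> 0"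
  unfolding bL_def Lk_def by (intro prod_nonneg ballI f_nonneg bTheta_in Omega_comp) auto

lemma Lhat_Suc: "Lhat K f thh (Suc n) w = Lhat K f thh n w * (\<Prod>k<K. f (thh k n w) (w (k, Suc n)))"
  unfolding Lhat_def by (simp add: prod.nat_ivl_Suc' mult.commute)

lemma bL_Suc: "bL K f (Suc n) th w = bL K f n th w * (\<Prod>k<K. f (th k) (w (k, Suc n)))"
  unfolding bL_def Lk_def by (simp add: prod.nat_ivl_Suc' prod.distrib mult.commute)

end

context setting begin

lemma KLint_pt:
  assumes t: "t \<in> Th0 \<union> Th1" and t': "t' \<in> Th0 \<union> Th1" and x: "x \<in> space N"
  shows "e2ennreal (max 0 (- KLint f t t' x)) + ennreal (f t x) \<le> e2ennreal (max 0 (KLint f t t' x)) + ennreal (f t' x)"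
proof -
  have u0: "f t x \<ge> 0" and v0: "f t' x \<ge> 0" using f_nonneg t t' x by auto
  consider "f t x = 0" | "f t x > 0" "f t' x = 0" | "f t x > 0" "f t' x > 0" using u0 v0 by linarith
  then show ?thesis
  proof cases
    case 1 then show ?thesis by (simp add: KLint_def)
  next
    case 2 then show ?thesis by (simp add: KLint_def)
  next
    case 3
    define u where "u = f t x"
    define v where "v = f t' x"
    have u: "u > 0" and v: "v > 0" using 3 by (auto simp: u_def v_def)
    define r where "r = u * ln (u / v)"
    have "ln (v / u) \<le> v / u - 1" using u v by (intro ln_le_minus_one) auto
    then have "u * ln (v / u) \<le> u * (v / u - 1)" using u by (intro mult_left_mono) auto
    also have "\<dots> = v - u" using u by (simp add: field_simps)
    finally have ineq: "r \<ge> u - v" using u v by (simp add: r_def ln_div right_diff_distrib)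
    have h: "KLint f t t' x = ereal r" using 3 by (simp add: KLint_def r_def u_def v_def)
    show ?thesis
    proof (cases "r \<ge> 0")
      case True
      have le: "ennreal u \<le> ennreal (r + v)" using ineq by (intro ennreal_leI) simp
      have e1: "max 0 (- KLint f t t' x) = 0" using True h by (auto simp: max_def)
      have e2: "max 0 (KLint f t t' x) = ereal r" using True h by (auto simp: max_def)
      have "ennreal (r + v) = ennreal r + ennreal v" using True v by (intro ennreal_plus) auto
      then show ?thesis unfolding e1 e2 u_def[symmetric] v_def[symmetric] e2ennreal_ereal
        using le by (simp add: zero_ennreal.abs_eq[symmetric])
    next
      case False
      have le: "ennreal (- r + u) \<le> ennreal v" using ineq by (intro ennreal_leI) simp
      have e1: "max 0 (- KLint f t t' x) = ereal (- r)" using False h by (auto simp: max_def)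
      have e2: "max 0 (KLint f t t' x) = 0" using False h by (auto simp: max_def)
      have "ennreal (- r + u) = ennreal (- r) + ennreal u" using False u by (intro ennreal_plus) auto
      then show ?thesis unfolding e1 e2 u_def[symmetric] v_def[symmetric] e2ennreal_ereal
        using le by (simp add: zero_ennreal.abs_eq[symmetric])
    qed
  qed
qed

lemma KLint_meas: "t \<in> Th0 \<union> Th1 \<Longrightarrow> t' \<in> Th0 \<union> Th1 \<Longrightarrow> KLint f t t' \<in> borel_measurable N"
  unfolding KLint_def[abs_def] using f_meas[of t] f_meas[of t'] by measurable

lemma KL_nonneg:
  assumes t: "t \<in> Th0 \<union> Th1" and t': "t' \<in> Th0 \<union> Th1"
  shows "KL N f t t' \<ge> 0"
proof -
  note m = KLint_meas[OF t t'] f_meas[OF t] f_meas[OF t']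
  have mA: "(\<lambda>x. e2ennreal (max 0 (- KLint f t t' x))) \<in> borel_measurable N" using m by measurable
  have mB: "(\<lambda>x. e2ennreal (max 0 (KLint f t t' x))) \<in> borel_measurable N" using m by measurable
  have "(\<integral>\<^sup>+x. e2ennreal (max 0 (- KLint f t t' x)) \<partial>N) + 1 =
        (\<integral>\<^sup>+x. e2ennreal (max 0 (- KLint f t t' x)) + ennreal (f t x) \<partial>N)"
    using mA m by (subst nn_integral_add) (auto simp: f_int[OF t])
  also have "\<dots> \<le> (\<integral>\<^sup>+x. e2ennreal (max 0 (KLint f t t' x)) + ennreal (f t' x) \<partial>N)"
    by (intro nn_integral_mono KLint_pt[OF t t'])
  also have "\<dots> = (\<integral>\<^sup>+x. e2ennreal (max 0 (KLint f t t' x)) \<partial>N) + 1"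
    using mB m by (subst nn_integral_add) (auto simp: f_int[OF t'])
  finally have le: "(\<integral>\<^sup>+x. e2ennreal (max 0 (- KLint f t t' x)) \<partial>N) \<le> (\<integral>\<^sup>+x. e2ennreal (max 0 (KLint f t t' x)) \<partial>N)"
    by simp
  then show ?thesis unfolding KL_def
    by (simp add: ereal_diff_positive less_eq_ennreal.rep_eq)
qed

end

context setting begin

lemma bTheta_obtain:
  assumes "th \<in> bTheta K Th0 Th1"
  obtains t0 t1 where "t0 \<in> Th0" "t1 \<in> Th1"
    "\<And>k. k < K \<Longrightarrow> th k \<in> Th0 \<Longrightarrow> th k = t0" "\<And>k. k < K \<Longrightarrow> th k \<in> Th1 \<Longrightarrow> th k = t1"
  using assms unfolding bTheta_def by blast

lemma bKL_ge:
  assumes th: "th \<in> bTheta K Th0 Th1" and th': "th' \<in> bTheta K Th0 Th1" and k: "k < K"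
  shows "KL N f (th k) (th' k) \<le> bKL K N f th th'"
proof -
  have "0 \<le> (\<Sum>j\<in>{..<K} - {k}. KL N f (th j) (th' j))"
    by (rule sum_nonneg) (use bTheta_in[OF th] bTheta_in[OF th'] in \<open>auto intro!: KL_nonneg\<close>)
  then have "KL N f (th k) (th' k) \<le> KL N f (th k) (th' k) + (\<Sum>j\<in>{..<K} - {k}. KL N f (th j) (th' j))"
    by (simp add: ereal_le_add_self)
  also have "\<dots> = bKL K N f th th'"
    unfolding bKL_def using k by (subst sum.remove[of "{..<K}" k]) auto
  finally show ?thesis .
qed

lemma I0_pos:
  assumes th: "th \<in> bTheta K Th0 Th1" and Th: "Th0 \<inter> Th1 = {}"
    and sep0: "\<And>t0. t0 \<in> Th0 \<Longrightarrow> (INF t \<in> Th1. KL N f t0 t) > 0"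
  shows "I0 K Th0 Th1 N f th > 0"
proof -
  obtain t0 t1 where t0: "t0 \<in> Th0" and t1: "t1 \<in> Th1"
    and e0: "\<And>k. k < K \<Longrightarrow> th k \<in> Th0 \<Longrightarrow> th k = t0" and e1: "\<And>k. k < K \<Longrightarrow> th k \<in> Th1 \<Longrightarrow> th k = t1"
    using bTheta_obtain[OF th] by metis
  define d where "d = (INF t \<in> Th1. KL N f t0 t)"
  have d: "d > 0" using sep0[OF t0] by (simp add: d_def)
  have "d \<le> I0 K Th0 Th1 N f th"
    unfolding I0_def
  proof (rule INF_greatest)
    fix th' assume "th' \<in> {th' \<in> bTheta K Th0 Th1. sigA K Th1 th' - sigA K Th1 th \<noteq> {}}"
    then obtain k where th': "th' \<in> bTheta K Th0 Th1" and k: "k < K" "th' k \<in> Th1" "th k \<notin> Th1"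
      by (auto simp: sigA_def)
    have "th k \<in> Th0" using bTheta_in[OF th k(1)] k by auto
    then have "th k = t0" using e0 k by auto
    then have "d \<le> KL N f (th k) (th' k)" unfolding d_def using k by (auto intro: INF_lower)
    also have "\<dots> \<le> bKL K N f th th'" by (rule bKL_ge[OF th th' k(1)])
    finally show "d \<le> bKL K N f th th'" .
  qed
  with d show ?thesis by (rule less_le_trans)
qed

lemma I1_pos:
  assumes th: "th \<in> bTheta K Th0 Th1" and Th: "Th0 \<inter> Th1 = {}"
    and sep1: "\<And>t1. t1 \<in> Th1 \<Longrightarrow> (INF t \<in> Th0. KL N f t1 t) > 0"
  shows "I1 K Th0 Th1 N f th > 0"
proof -
  obtain t0 t1 where t0: "t0 \<in> Th0" and t1: "t1 \<in> Th1"
    and e0: "\<And>k. k < K \<Longrightarrow> th k \<in> Th0 \<Longrightarrow> th k = t0" and e1: "\<And>k. k < K \<Longrightarrow> th k \<in> Th1 \<Longrightarrow> th k = t1"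
    using bTheta_obtain[OF th] by metis
  define d where "d = (INF t \<in> Th0. KL N f t1 t)"
  have d: "d > 0" using sep1[OF t1] by (simp add: d_def)
  have "d \<le> I1 K Th0 Th1 N f th"
    unfolding I1_def
  proof (rule INF_greatest)
    fix th' assume "th' \<in> {th' \<in> bTheta K Th0 Th1. sigA K Th1 th - sigA K Th1 th' \<noteq> {}}"
    then obtain k where th': "th' \<in> bTheta K Th0 Th1" and k: "k < K" "th k \<in> Th1" "th' k \<notin> Th1"
      by (auto simp: sigA_def)
    have "th' k \<in> Th0" using bTheta_in[OF th' k(1)] k by auto
    have "th k = t1" using e1 k by auto
    then have "d \<le> KL N f (th k) (th' k)" unfolding d_def using k \<open>th' k \<in> Th0\<close> by (auto intro: INF_lower)
    also have "\<dots> \<le> bKL K N f th th'" by (rule bKL_ge[OF th th' k(1)])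
    finally show "d \<le> bKL K N f th th'" .
  qed
  with d show ?thesis by (rule less_le_trans)
qed

end

locale fixth = setting +
  fixes th :: "nat \<Rightarrow> 'p"
  assumes th: "th \<in> bTheta K Th0 Th1"
begin

abbreviation "II \<equiv> {..<K} \<times> (UNIV :: nat set)"
abbreviation "MM \<equiv> (\<lambda>kn. density N (\<lambda>x. ennreal (f (th (fst kn)) x)))"
abbreviation "P \<equiv> Pth K N f th"

lemma P_eq: "P = PiM II MM" by (simp add: Pth_def)

lemma th_in: "k < K \<Longrightarrow> th k \<in> Th0 \<union> Th1" using bTheta_in[OF th] .

lemma MM_prob: "i \<in> II \<Longrightarrow> prob_space (MM i)"
proof -
  assume "i \<in> II"
  then have "th (fst i) \<in> Th0 \<union> Th1" by (intro th_in) auto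
  then show ?thesis by (rule prob_dens)
qed

lemma prob_P: "prob_space P" using prob_Pth[OF th] .

definition "phi k t y = (if 0 < f (th k) y then ennreal (f t y / f (th k) y) else 0)"
definition "RR n w = (if 0 < bL K f n th w then ennreal (Lhat K f thh n w / bL K f n th w) else 0)"

lemma g_nonneg: "k < K \<Longrightarrow> y \<in> space N \<Longrightarrow> f (th k) y \<ge> 0" by (intro f_nonneg th_in)

lemma RR_Suc:
  assumes w: "w \<in> space (Omega K N)"
  shows "RR (Suc n) w = RR n w * (\<Prod>k<K. phi k (thh k n w) (w (k, Suc n)))"
proof -
  define G where "G = (\<Prod>k<K. f (th k) (w (k, Suc n)))"
  define F where "F = (\<Prod>k<K. f (thh k n w) (w (k, Suc n)))"
  have B0: "bL K f n th w \<ge> 0" using bL_nonneg[OF th w] .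
  have L0: "Lhat K f thh n w \<ge> 0" using Lhat_nonneg[OF w] .
  have G0: "G \<ge> 0" unfolding G_def by (intro prod_nonneg) (auto intro!: g_nonneg Omega_comp w)
  have F0: "\<And>k. k < K \<Longrightarrow> f (thh k n w) (w (k, Suc n)) \<ge> 0"
    by (intro f_nonneg thh_in w Omega_comp)
  have BS: "bL K f (Suc n) th w = bL K f n th w * G" by (simp add: bL_Suc G_def)
  have LS: "Lhat K f thh (Suc n) w = Lhat K f thh n w * F" by (simp add: Lhat_Suc F_def)
  show ?thesis
  proof (cases "bL K f n th w > 0")
    case Bpos: True
    show ?thesis
    proof (cases "\<forall>k<K. 0 < f (th k) (w (k, Suc n))")
      case True
      have Gpos: "G > 0" unfolding G_def using True by (intro prod_pos) auto
      have "(\<Prod>k<K. phi k (thh k n w) (w (k, Suc n))) = (\<Prod>k<K. ennreal (f (thh k n w) (w (k, Suc n)) / f (th k) (w (k, Suc n))))"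
        using True by (intro prod.cong) (auto simp: phi_def)
      also have "\<dots> = ennreal (\<Prod>k<K. f (thh k n w) (w (k, Suc n)) / f (th k) (w (k, Suc n)))"
        using True F0 by (intro prod_ennreal) (auto intro!: divide_nonneg_pos)
      also have "\<dots> = ennreal (F / G)" by (simp add: F_def G_def prod_dividef)
      finally have pe: "(\<Prod>k<K. phi k (thh k n w) (w (k, Suc n))) = ennreal (F / G)" .
      have F00: "F \<ge> 0" unfolding F_def using F0 by (intro prod_nonneg) auto
      have "RR (Suc n) w = ennreal (Lhat K f thh n w * F / (bL K f n th w * G))"
        using Bpos Gpos by (simp add: RR_def BS LS)
      also have "\<dots> = ennreal (Lhat K f thh n w / bL K f n th w) * ennreal (F / G)"
        using Bpos Gpos L0 F00 by (subst ennreal_mult'[symmetric]) (auto simp: field_simps)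
      finally show ?thesis using Bpos pe by (simp add: RR_def)
    next
      case False
      then obtain k where k: "k < K" "\<not> 0 < f (th k) (w (k, Suc n))" by auto
      have "f (th k) (w (k, Suc n)) = 0" using k g_nonneg[OF k(1) Omega_comp[OF w k(1), of "Suc n"]] by auto
      then have "G = 0" unfolding G_def using k by (intro prod_zero) auto
      moreover have "(\<Prod>k<K. phi k (thh k n w) (w (k, Suc n))) = 0"
        using k by (intro prod_zero) (auto simp: phi_def)
      ultimately show ?thesis by (simp add: RR_def BS)
    qed
  next
    case False
    then have "bL K f n th w = 0" using B0 by auto
    then show ?thesis by (simp add: RR_def BS)
  qed
qed

lemma phi_meas: "k < K \<Longrightarrow> (\<lambda>(t, y). phi k t y) \<in> borel_measurable (Pm \<Otimes>\<^sub>M N)"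
proof -
  assume k: "k < K"
  have a: "(\<lambda>p. f (fst p) (snd p)) \<in> borel_measurable (Pm \<Otimes>\<^sub>M N)"
    using fmeas by (simp add: split_beta)
  have b: "(\<lambda>p. f (th k) (snd p)) \<in> borel_measurable (Pm \<Otimes>\<^sub>M N)"
    using measurable_comp[OF measurable_snd f_meas[OF th_in[OF k]]] by (simp add: comp_def)
  have "(\<lambda>p. if 0 < f (th k) (snd p) then ennreal (f (fst p) (snd p) / f (th k) (snd p)) else 0) \<in> borel_measurable (Pm \<Otimes>\<^sub>M N)"
    using a b by measurable
  then show ?thesis by (simp add: phi_def split_beta)
qed

lemma phi_int: "k < K \<Longrightarrow> t \<in> Th0 \<union> Th1 \<Longrightarrow> (\<integral>\<^sup>+y. phi k t y \<partial>density N (\<lambda>x. ennreal (f (th k) x))) \<le> 1"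
proof -
  assume k: "k < K" and t: "t \<in> Th0 \<union> Th1"
  have pm: "phi k t \<in> borel_measurable N"
    unfolding phi_def[abs_def] using f_meas[OF t] f_meas[OF th_in[OF k]] by measurable
  have "(\<integral>\<^sup>+y. phi k t y \<partial>density N (\<lambda>x. ennreal (f (th k) x))) = (\<integral>\<^sup>+y. ennreal (f (th k) y) * phi k t y \<partial>N)"
    using f_meas[OF th_in[OF k]] pm by (subst nn_integral_density) auto
  also have "\<dots> \<le> (\<integral>\<^sup>+y. ennreal (f t y) \<partial>N)"
  proof (rule nn_integral_mono)
    fix y assume y: "y \<in> space N"
    show "ennreal (f (th k) y) * phi k t y \<le> ennreal (f t y)"
    proof (cases "0 < f (th k) y")
      case True
      then have "ennreal (f (th k) y) * phi k t y = ennreal (f (th k) y) * ennreal (f t y / f (th k) y)"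
        by (simp add: phi_def)
      also have "\<dots> = ennreal (f (th k) y * (f t y / f (th k) y))"
        by (rule ennreal_mult[symmetric]) (use True f_nonneg[OF t y] in auto)
      also have "\<dots> = ennreal (f t y)" using True by simp
      finally show ?thesis by simp
    qed (simp add: phi_def)
  qed
  also have "\<dots> = 1" using f_int[OF t] .
  finally show ?thesis .
qed

end

context fixth begin

lemma sets_P: "sets P = sets (Omega K N)" by (rule sets_Pth)
lemma space_P: "space P = space (Omega K N)" by (rule space_Pth)

lemma phi_meas_N: "k < K \<Longrightarrow> t \<in> Th0 \<union> Th1 \<Longrightarrow> phi k t \<in> borel_measurable N"
  unfolding phi_def[abs_def] using f_meas[of t] f_meas[OF th_in, of k] by measurable

lemma phi_comp_meas: "k < K \<Longrightarrow> (\<lambda>w. phi k (thh k m w) (w (k, s))) \<in> borel_measurable (Omega K N)"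
proof -
  assume k: "k < K"
  have "(\<lambda>w. (thh k m w, w (k, s))) \<in> measurable (Omega K N) (Pm \<Otimes>\<^sub>M N)"
    using thh_meas[OF k] meas_comp_Omega[OF k] by (rule measurable_Pair)
  from measurable_comp[OF this phi_meas[OF k]] show ?thesis by (simp add: comp_def)
qed

lemma upd_space: "w \<in> space (Omega K N) \<Longrightarrow> j < K \<Longrightarrow> z \<in> space N \<Longrightarrow> w((j, s) := z) \<in> space (Omega K N)"
  by (auto simp: space_Omega PiE_iff extensional_def)

lemma thh_upd: "w \<in> space (Omega K N) \<Longrightarrow> k < K \<Longrightarrow> j < K \<Longrightarrow> z \<in> space N \<Longrightarrow> m < s \<Longrightarrow>
    thh k m (w((j, s) := z)) = thh k m w"
  by (rule thh_dep) (auto intro: upd_space)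

lemma step_le_aux:
  assumes Qm: "Q \<in> borel_measurable (Omega K N)"
    and Qinv: "\<And>w k z. w \<in> space (Omega K N) \<Longrightarrow> k < K \<Longrightarrow> z \<in> space N \<Longrightarrow> Q (w((k, Suc m) := z)) = Q w"
  shows "j \<le> K \<Longrightarrow> (\<integral>\<^sup>+w. Q w * (\<Prod>k<j. phi k (thh k m w) (w (k, Suc m))) \<partial>P) \<le> (\<integral>\<^sup>+w. Q w \<partial>P)"
proof (induction j)
  case 0 then show ?case by simp
next
  case (Suc j)
  then have j: "j < K" by simp
  define Q' where "Q' w = Q w * (\<Prod>k<j. phi k (thh k m w) (w (k, Suc m)))" for w
  define h where "h w y = Q' w * phi j (thh j m w) y" for w y
  define i where "i = (j, Suc m)"
  have i: "i \<in> II" using j by (simp add: i_def)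
  have MMi: "MM i = density N (\<lambda>x. ennreal (f (th j) x))" by (simp add: i_def)
  have Q'm: "Q' \<in> borel_measurable (Omega K N)"
    unfolding Q'_def[abs_def] using Qm j
    by (intro borel_measurable_times_ennreal borel_measurable_prod_ennreal phi_comp_meas) auto
  have hm0: "(\<lambda>(w, y). h w y) \<in> borel_measurable (Omega K N \<Otimes>\<^sub>M N)"
  proof -
    have "(\<lambda>p. (thh j m (fst p), snd p)) \<in> measurable (Omega K N \<Otimes>\<^sub>M N) (Pm \<Otimes>\<^sub>M N)"
      using measurable_comp[OF measurable_fst thh_meas[OF j]] by (intro measurable_Pair) (auto simp: comp_def)
    from measurable_comp[OF this phi_meas[OF j]]
    have m2: "(\<lambda>p. phi j (thh j m (fst p)) (snd p)) \<in> borel_measurable (Omega K N \<Otimes>\<^sub>M N)" by (simp add: comp_def)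
    have m1: "(\<lambda>p. Q' (fst p)) \<in> borel_measurable (Omega K N \<Otimes>\<^sub>M N)"
      using measurable_comp[OF measurable_fst Q'm] by (simp add: comp_def)
    show ?thesis unfolding h_def split_beta by (rule borel_measurable_times_ennreal[OF m1 m2])
  qed
  have hm: "(\<lambda>(w, y). h w y) \<in> borel_measurable (PiM II MM \<Otimes>\<^sub>M MM i)"
  proof -
    have "sets (PiM II MM \<Otimes>\<^sub>M MM i) = sets (Omega K N \<Otimes>\<^sub>M N)"
      using sets_P P_eq by (intro sets_pair_measure_cong) (auto simp: MMi)
    then show ?thesis using hm0 by (simp cong: measurable_cong_sets)
  qed
  have spII: "space (PiM II MM) = space (Omega K N)" using space_P P_eq by simp
  have inv: "h (w(i := z)) y = h w y" if w: "w \<in> space (PiM II MM)" and z: "z \<in> space (MM i)" for w z y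
  proof -
    have w': "w \<in> space (Omega K N)" using w spII by simp
    have z': "z \<in> space N" using z by (simp add: MMi)
    have t0: "thh k m (w((j, Suc m) := z)) = thh k m w" if "k < K" for k
      using thh_upd[OF w' that j z'] by simp
    have t: "thh k m (w(i := z)) = thh k m w" if "k < K" for k
      unfolding i_def using t0[OF that] .
    have "Q (w(i := z)) = Q w" unfolding i_def by (rule Qinv[OF w' j z'])
    moreover have "(\<Prod>k<j. phi k (thh k m (w(i := z))) ((w(i := z)) (k, Suc m))) = (\<Prod>k<j. phi k (thh k m w) (w (k, Suc m)))"
      using j by (intro prod.cong) (auto simp: t0 i_def)
    ultimately show ?thesis unfolding h_def Q'_def using t[OF j] by simp
  qed
  have "(\<integral>\<^sup>+w. Q w * (\<Prod>k<Suc j. phi k (thh k m w) (w (k, Suc m))) \<partial>P) = (\<integral>\<^sup>+w. h w (w i) \<partial>PiM II MM)"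
    by (simp add: P_eq h_def Q'_def i_def mult.assoc)
  also have "\<dots> = (\<integral>\<^sup>+w. (\<integral>\<^sup>+y. h w y \<partial>MM i) \<partial>PiM II MM)"
    by (rule single_coord[OF MM_prob i hm inv])
  also have "\<dots> = (\<integral>\<^sup>+w. Q' w * (\<integral>\<^sup>+y. phi j (thh j m w) y \<partial>MM i) \<partial>PiM II MM)"
  proof (rule nn_integral_cong)
    fix w assume "w \<in> space (PiM II MM)"
    then have w: "w \<in> space (Omega K N)" using spII by simp
    have "phi j (thh j m w) \<in> borel_measurable (MM i)"
      using phi_meas_N[OF j thh_in[OF j w]] by (simp add: MMi)
    then show "(\<integral>\<^sup>+y. h w y \<partial>MM i) = Q' w * (\<integral>\<^sup>+y. phi j (thh j m w) y \<partial>MM i)"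
      unfolding h_def by (rule nn_integral_cmult)
  qed
  also have "\<dots> \<le> (\<integral>\<^sup>+w. Q' w \<partial>PiM II MM)"
  proof (rule nn_integral_mono)
    fix w assume "w \<in> space (PiM II MM)"
    then have w: "w \<in> space (Omega K N)" using spII by simp
    have "(\<integral>\<^sup>+y. phi j (thh j m w) y \<partial>MM i) \<le> 1"
      unfolding MMi by (rule phi_int[OF j thh_in[OF j w]])
    then show "Q' w * (\<integral>\<^sup>+y. phi j (thh j m w) y \<partial>MM i) \<le> Q' w"
      by (metis mult.comm_neutral mult_left_mono zero_le)
  qed
  also have "\<dots> \<le> (\<integral>\<^sup>+w. Q w \<partial>P)"
    using Suc.IH j by (simp add: Q'_def P_eq)
  finally show ?case .
qed

lemma step_le:
  assumes Qm: "Q \<in> borel_measurable (Omega K N)"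
    and Qinv: "\<And>w k z. w \<in> space (Omega K N) \<Longrightarrow> k < K \<Longrightarrow> z \<in> space N \<Longrightarrow> Q (w((k, Suc m) := z)) = Q w"
  shows "(\<integral>\<^sup>+w. Q w * (\<Prod>k<K. phi k (thh k m w) (w (k, Suc m))) \<partial>P) \<le> (\<integral>\<^sup>+w. Q w \<partial>P)"
  using step_le_aux[OF Qm Qinv, of K] by simp

end

context fixth begin

definition "Cc a n w \<longleftrightarrow> 0 < bL K f n th w \<and> a * bL K f n th w \<le> Lhat K f thh n w"
definition "Hs a m = {w \<in> space (Omega K N). \<forall>n\<in>{1..m}. \<not> Cc a n w}"
definition "Es a m = {w \<in> space (Omega K N). \<exists>n\<in>{1..m}. Cc a n w}"

lemma bL_upd: "n < s \<Longrightarrow> bL K f n th (w((j, s) := z)) = bL K f n th w"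
  unfolding bL_def Lk_def by (intro prod.cong refl) auto

lemma Lhat_upd: "w \<in> space (Omega K N) \<Longrightarrow> j < K \<Longrightarrow> z \<in> space N \<Longrightarrow> n < s \<Longrightarrow>
    Lhat K f thh n (w((j, s) := z)) = Lhat K f thh n w"
  unfolding Lhat_def by (intro prod.cong refl) (auto simp: thh_upd)

lemma Cc_upd: "w \<in> space (Omega K N) \<Longrightarrow> j < K \<Longrightarrow> z \<in> space N \<Longrightarrow> n < s \<Longrightarrow>
    Cc a n (w((j, s) := z)) = Cc a n w"
  by (simp add: Cc_def bL_upd Lhat_upd)

lemma RR_upd: "w \<in> space (Omega K N) \<Longrightarrow> j < K \<Longrightarrow> z \<in> space N \<Longrightarrow> n < s \<Longrightarrow>
    RR n (w((j, s) := z)) = RR n w"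
  by (simp add: RR_def bL_upd Lhat_upd)

lemma Hs_upd: "w \<in> space (Omega K N) \<Longrightarrow> j < K \<Longrightarrow> z \<in> space N \<Longrightarrow>
    indicator (Hs a m) (w((j, Suc m) := z)) = (indicator (Hs a m) w :: ennreal)"
  using upd_space[of w j z "Suc m"] by (auto simp: Hs_def indicator_def Cc_upd)

lemma Cc_meas1: "{w \<in> space (Omega K N). a * bL K f n th w \<le> Lhat K f thh n w} \<in> sets (Omega K N)"
proof -
  have m1: "(\<lambda>w. a * bL K f n th w) \<in> borel_measurable (Omega K N)"
    using meas_bL[OF th, of n] by (intro borel_measurable_times) auto
  have m2: "(\<lambda>w. Lhat K f thh n w) \<in> borel_measurable (Omega K N)" using meas_Lhat .
  show ?thesis using m1 m2 by measurable
qed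

lemma Cc_meas2: "{w \<in> space (Omega K N). 0 < bL K f n th w} \<in> sets (Omega K N)"
proof -
  have m3: "(\<lambda>w. bL K f n th w) \<in> borel_measurable (Omega K N)" using meas_bL[OF th, of n] .
  show ?thesis using m3 by measurable
qed

lemma Cc_meas: "{w \<in> space (Omega K N). Cc a n w} \<in> sets (Omega K N)"
proof -
  have "{w \<in> space (Omega K N). Cc a n w} = {w \<in> space (Omega K N). 0 < bL K f n th w} \<inter> {w \<in> space (Omega K N). a * bL K f n th w \<le> Lhat K f thh n w}"
    by (auto simp: Cc_def)
  then show ?thesis using Cc_meas1 Cc_meas2 by auto
qed

lemma Hs_meas: "Hs a m \<in> sets (Omega K N)"
proof -
  have "Hs a m = space (Omega K N) - (\<Union>n\<in>{1..m}. {w \<in> space (Omega K N). Cc a n w})"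
    by (auto simp: Hs_def)
  then show ?thesis using Cc_meas by auto
qed

lemma Es_meas: "Es a m \<in> sets (Omega K N)"
proof -
  have "Es a m = (\<Union>n\<in>{1..m}. {w \<in> space (Omega K N). Cc a n w})"
    by (auto simp: Es_def)
  then show ?thesis using Cc_meas by auto
qed

lemma RR_meas: "RR n \<in> borel_measurable (Omega K N)"
proof -
  note [measurable] = meas_bL[OF th, of n] meas_Lhat[of n]
  show ?thesis unfolding RR_def[abs_def] by measurable
qed

lemma ville_inv:
  assumes a: "a > 0"
  shows "ennreal a * emeasure P (Es a m) + (\<integral>\<^sup>+w. indicator (Hs a m) w * RR m w \<partial>P) \<le> 1"
proof (induction m)
  case 0
  have "Es a 0 = {}" by (auto simp: Es_def)
  moreover have "Hs a 0 = space P" by (auto simp: Hs_def space_P)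
  moreover have "RR 0 w = 1" for w by (simp add: RR_def bL_def Lk_def Lhat_def)
  ultimately show ?case using prob_space.emeasure_space_1[OF prob_P] by simp
next
  case (Suc m)
  define D where "D = {w \<in> Hs a m. Cc a (Suc m) w}"
  have Dm: "D \<in> sets P"
  proof -
    have "D = Hs a m \<inter> {w \<in> space (Omega K N). Cc a (Suc m) w}" by (auto simp: D_def Hs_def)
    then show ?thesis using Hs_meas Cc_meas sets_P by auto
  qed
  have Esm: "Es a m \<in> sets P" using Es_meas sets_P by auto
  have EsS: "Es a (Suc m) = Es a m \<union> D" 
    by (auto simp: Es_def D_def Hs_def le_Suc_eq Bex_def atLeastAtMost_iff)
  have disj: "Es a m \<inter> D = {}" by (auto simp: Es_def D_def Hs_def)
  have HsS: "Hs a (Suc m) = {w \<in> Hs a m. \<not> Cc a (Suc m) w}"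
  proof (intro set_eqI iffI)
    fix w assume "w \<in> Hs a (Suc m)" then show "w \<in> {w \<in> Hs a m. \<not> Cc a (Suc m) w}"
      by (auto simp: Hs_def)
  next
    fix w assume "w \<in> {w \<in> Hs a m. \<not> Cc a (Suc m) w}" then show "w \<in> Hs a (Suc m)"
      by (auto simp: Hs_def le_Suc_eq)
  qed
  define Q where "Q w = indicator (Hs a m) w * RR m w" for w
  have Qm: "Q \<in> borel_measurable (Omega K N)"
    unfolding Q_def[abs_def] using Hs_meas RR_meas by (intro borel_measurable_times_ennreal) auto
  have Qinv: "Q (w((k, Suc m) := z)) = Q w" if "w \<in> space (Omega K N)" "k < K" "z \<in> space N" for w k z
    using that by (simp add: Q_def Hs_upd RR_upd)
  have mR: "RR (Suc m) \<in> borel_measurable P" using RR_meas sets_P by (simp cong: measurable_cong_sets)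
  have pt: "indicator (Hs a m) w * RR (Suc m) w = indicator D w * RR (Suc m) w + indicator (Hs a (Suc m)) w * RR (Suc m) w" for w
    by (auto simp: indicator_def D_def HsS)
  have lowR: "indicator D w * ennreal a \<le> indicator D w * RR (Suc m) w" for w
  proof (cases "w \<in> D")
    case True
    then have c: "0 < bL K f (Suc m) th w" "a * bL K f (Suc m) th w \<le> Lhat K f thh (Suc m) w"
      by (auto simp: D_def Cc_def)
    then have "a \<le> Lhat K f thh (Suc m) w / bL K f (Suc m) th w" by (simp add: field_simps)
    then have "ennreal a \<le> RR (Suc m) w" using c by (simp add: RR_def ennreal_leI)
    then show ?thesis using True by simp
  qed simp
  have "ennreal a * emeasure P (Es a (Suc m)) + (\<integral>\<^sup>+w. indicator (Hs a (Suc m)) w * RR (Suc m) w \<partial>P)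
      = ennreal a * emeasure P (Es a m) + ((\<integral>\<^sup>+w. indicator D w * ennreal a \<partial>P) + (\<integral>\<^sup>+w. indicator (Hs a (Suc m)) w * RR (Suc m) w \<partial>P))"
  proof -
    have "emeasure P (Es a (Suc m)) = emeasure P (Es a m) + emeasure P D"
      unfolding EsS using Esm Dm disj by (intro plus_emeasure[symmetric]) auto
    moreover have "(\<integral>\<^sup>+w. indicator D w * ennreal a \<partial>P) = ennreal a * emeasure P D"
      using nn_integral_cmult_indicator[OF Dm, of "ennreal a"] by (simp add: mult.commute)
    ultimately show ?thesis by (simp add: distrib_left add.assoc)
  qed
  also have "\<dots> \<le> ennreal a * emeasure P (Es a m) + ((\<integral>\<^sup>+w. indicator D w * RR (Suc m) w \<partial>P) + (\<integral>\<^sup>+w. indicator (Hs a (Suc m)) w * RR (Suc m) w \<partial>P))"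
    by (intro add_mono order_refl nn_integral_mono lowR)
  also have "(\<integral>\<^sup>+w. indicator D w * RR (Suc m) w \<partial>P) + (\<integral>\<^sup>+w. indicator (Hs a (Suc m)) w * RR (Suc m) w \<partial>P)
      = (\<integral>\<^sup>+w. indicator (Hs a m) w * RR (Suc m) w \<partial>P)"
  proof -
    have HSm: "Hs a (Suc m) \<in> sets P" using Hs_meas sets_P by auto
    show ?thesis unfolding pt using Dm HSm mR
      by (subst nn_integral_add) auto
  qed
  also have "(\<integral>\<^sup>+w. indicator (Hs a m) w * RR (Suc m) w \<partial>P) = (\<integral>\<^sup>+w. Q w * (\<Prod>k<K. phi k (thh k m w) (w (k, Suc m))) \<partial>P)"
    by (intro nn_integral_cong) (simp add: Q_def RR_Suc space_P mult.assoc)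
  also have "\<dots> \<le> (\<integral>\<^sup>+w. Q w \<partial>P)"
    by (rule step_le[OF Qm Qinv])
  also have "ennreal a * emeasure P (Es a m) + \<dots> \<le> 1"
    using Suc.IH by (simp add: Q_def)
  finally show ?case by - (simp add: add_left_mono)
qed

end

lemma ennreal_inv_bound: "0 < (a::real) \<Longrightarrow> ennreal a * x \<le> 1 \<Longrightarrow> x \<le> ennreal (1 / a)"
proof -
  assume a: "0 < a" and h: "ennreal a * x \<le> 1"
  have "ennreal (1 / a) * ennreal a = 1"
    using a by (simp add: ennreal_mult[symmetric])
  then have "x = ennreal (1 / a) * (ennreal a * x)" by (simp add: mult.assoc[symmetric])
  also have "\<dots> \<le> ennreal (1 / a) * 1" by (intro mult_left_mono h) auto
  finally show ?thesis by simp
qed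

context fixth begin

lemma ville:
  assumes a: "a > 0"
  shows "emeasure P {w \<in> space (Omega K N). \<exists>n\<ge>1. Cc a n w} \<le> ennreal (1 / a)"
proof -
  have eq: "{w \<in> space (Omega K N). \<exists>n\<ge>1. Cc a n w} = (\<Union>m. Es a m)"
    by (auto simp: Es_def intro: exI[where x="n" for n] bexI) (metis atLeastAtMost_iff order_refl)
  have inc: "incseq (Es a)"
    by (rule incseq_SucI) (auto simp: Es_def)
  have rs: "range (Es a) \<subseteq> sets P" using Es_meas sets_P by auto
  have "emeasure P (\<Union>m. Es a m) = (SUP m. emeasure P (Es a m))"
    using SUP_emeasure_incseq[OF rs inc] by simp
  also have "\<dots> \<le> ennreal (1 / a)"
  proof (rule SUP_least)
    fix m
    have "ennreal a * emeasure P (Es a m) \<le> ennreal a * emeasure P (Es a m) + (\<integral>\<^sup>+w. indicator (Hs a m) w * RR m w \<partial>P)"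
      by simp
    also have "\<dots> \<le> 1" by (rule ville_inv[OF a])
    finally show "emeasure P (Es a m) \<le> ennreal (1 / a)" by (rule ennreal_inv_bound[OF a])
  qed
  finally show ?thesis unfolding eq .
qed

lemma AE_pos: "AE w in P. \<forall>n. 0 < bL K f n th w"
proof -
  have c: "AE w in P. k < K \<longrightarrow> 0 < f (th k) (w (k, s))" for k s
  proof (cases "k < K")
    case True
    have i: "(k, s) \<in> II" using True by simp
    have "AE x in MM (k, s). 0 < f (th k) x"
    proof -
      have "AE x in N. 0 < ennreal (f (th k) x) \<longrightarrow> 0 < f (th k) x"
        by (rule AE_I2) (simp add: ennreal_less_zero_iff)
      then show ?thesis using f_meas[OF th_in[OF True]] by (simp add: AE_density)
    qed
    from AE_PiM_component[where M=MM and I=II and P="\<lambda>x. 0 < f (th k) x", OF MM_prob i this]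
    have 1: "AE w in PiM II MM. 0 < f (th k) (w (k, s))" .
    have 2: "AE w in P. 0 < f (th k) (w (k, s))" using 1 by (simp only: P_eq)
    show ?thesis using 2 by (rule eventually_mono) simp
  qed simp
  have "AE w in P. \<forall>k (s::nat). k < K \<longrightarrow> 0 < f (th k) (w (k, s))"
    using c by (simp add: AE_all_countable)
  then show ?thesis
  proof (rule eventually_mono)
    fix w assume h: "\<forall>k (s::nat). k < K \<longrightarrow> 0 < f (th k) (w (k, s))"
    show "\<forall>n. 0 < bL K f n th w"
      using h unfolding bL_def Lk_def by (auto intro!: prod_pos)
  qed
qed

lemma err_bound:
  assumes a: "a > 0" and S: "S \<subseteq> space (Omega K N)"
    and h: "\<And>w. w \<in> S \<Longrightarrow> \<exists>n\<ge>1. ennreal a \<le> ennreal (Lhat K f thh n w) / ennreal (bL K f n th w)"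
  shows "outer_measure_of P S \<le> ennreal (1 / a)"
proof -
  obtain N0 where N0: "N0 \<in> null_sets P" "{w \<in> space P. \<not> (\<forall>n. 0 < bL K f n th w)} \<subseteq> N0"
    using AE_pos by (auto elim!: AE_E)
  define F where "F = {w \<in> space (Omega K N). \<exists>n\<ge>1. Cc a n w}"
  have Fm: "F \<in> sets P"
  proof -
    have "F = (\<Union>m. Es a m)" by (auto simp: Es_def F_def) (metis atLeastAtMost_iff order_refl)
    then show ?thesis using Es_meas sets_P by auto
  qed
  have sub: "S \<subseteq> F \<union> N0"
  proof
    fix w assume w: "w \<in> S"
    show "w \<in> F \<union> N0"
    proof (cases "w \<in> N0")
      case False
      have ws: "w \<in> space (Omega K N)" using w S by auto
      then have pos: "\<forall>n. 0 < bL K f n th w" using N0(2) False space_P by auto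
      obtain n where n: "n \<ge> 1" "ennreal a \<le> ennreal (Lhat K f thh n w) / ennreal (bL K f n th w)"
        using h[OF w] by auto
      have L0: "Lhat K f thh n w \<ge> 0" using Lhat_nonneg[OF ws] .
      have B0: "bL K f n th w > 0" using pos by auto
      have "ennreal a \<le> ennreal (Lhat K f thh n w / bL K f n th w)"
        using n(2) divide_ennreal[OF L0 B0] by simp
      then have "a \<le> Lhat K f thh n w / bL K f n th w"
        using L0 B0 by (subst (asm) ennreal_le_iff) auto
      then have "a * bL K f n th w \<le> Lhat K f thh n w" using B0 by (simp add: field_simps)
      then have "Cc a n w" using B0 by (simp add: Cc_def)
      then show ?thesis using ws n(1) by (auto simp: F_def)
    qed simp
  qed
  have "outer_measure_of P S \<le> outer_measure_of P (F \<union> N0)"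
    by (rule outer_measure_of_mono[OF sub])
  also have "\<dots> = emeasure P (F \<union> N0)" using Fm N0(1) by (intro outer_measure_of_eq) auto
  also have "\<dots> \<le> emeasure P F + emeasure P N0" using Fm N0(1) by (intro emeasure_subadditive) auto
  also have "\<dots> = emeasure P F" using N0(1) by auto
  also have "\<dots> \<le> ennreal (1 / a)" unfolding F_def by (rule ville[OF a])
  finally show ?thesis .
qed

end

lemma That_fin:
  assumes "That K Th0 Th1 f thh a b w < \<infinity>"
  obtains n where "That K Th0 Th1 f thh a b w = enat n" "n \<ge> 1" "stopcond K Th0 Th1 f thh a b n w"
    "\<And>m. 1 \<le> m \<Longrightarrow> m < n \<Longrightarrow> \<not> stopcond K Th0 Th1 f thh a b m w"
proof -
  have ex: "\<exists>n\<ge>1. stopcond K Th0 Th1 f thh a b n w"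
    using assms by (auto simp: That_def split: if_splits)
  define n where "n = (LEAST n. n \<ge> 1 \<and> stopcond K Th0 Th1 f thh a b n w)"
  have 1: "n \<ge> 1 \<and> stopcond K Th0 Th1 f thh a b n w"
    unfolding n_def using ex by (rule LeastI_ex) 
  have 2: "\<not> stopcond K Th0 Th1 f thh a b m w" if "1 \<le> m" "m < n" for m
    using not_less_Least[of m "\<lambda>n. n \<ge> 1 \<and> stopcond K Th0 Th1 f thh a b n w"] that by (auto simp: n_def)
  have "That K Th0 Th1 f thh a b w = enat n" using ex by (simp add: That_def n_def)
  then show ?thesis using that 1 2 by blast
qed

lemma That_eq_iff:
  "That K Th0 Th1 f thh a b w = enat n \<longleftrightarrow>
     (n \<ge> 1 \<and> stopcond K Th0 Th1 f thh a b n w \<and> (\<forall>m. 1 \<le> m \<longrightarrow> m < n \<longrightarrow> \<not> stopcond K Th0 Th1 f thh a b m w))"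
  (is "?L \<longleftrightarrow> ?R")
proof
  assume L: ?L
  then have "That K Th0 Th1 f thh a b w < \<infinity>" by simp
  then obtain n' where "That K Th0 Th1 f thh a b w = enat n'" "n' \<ge> 1" "stopcond K Th0 Th1 f thh a b n' w"
    "\<And>m. 1 \<le> m \<Longrightarrow> m < n' \<Longrightarrow> \<not> stopcond K Th0 Th1 f thh a b m w"
    using That_fin[of K Th0 Th1 f thh a b w] by blast
  then show ?R using L by auto
next
  assume R: ?R
  then have ex: "\<exists>n\<ge>1. stopcond K Th0 Th1 f thh a b n w" by auto
  have "(LEAST n. n \<ge> 1 \<and> stopcond K Th0 Th1 f thh a b n w) = n"
    by (rule Least_equality) (use R in \<open>auto simp: not_less[symmetric]\<close>)
  then show ?L using ex by (simp add: That_def)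
qed

lemma div_anti:
  fixes x y z :: ennreal
  assumes zy: "z \<le> y"
  shows "x / y \<le> x / z"
proof (cases "z = 0")
  case True then show ?thesis by (simp add: ennreal_divide_zero)
next
  case z0: False
  show ?thesis
  proof (cases "y = top")
    case True then show ?thesis by simp
  next
    case yt: False
    then have zt: "z \<noteq> top" using zy by (auto simp: top_unique)
    obtain ry where ry: "y = ennreal ry" "0 \<le> ry" using yt by (cases y) auto
    obtain rz where rz: "z = ennreal rz" "0 \<le> rz" using zt by (cases z) auto
    have rz0: "0 < rz" using z0 rz by (auto simp: less_le)
    have rzy: "rz \<le> ry" using zy ry rz by simp
    show ?thesis
    proof (cases x)
      case (real rx)
      then show ?thesis using ry rz rz0 rzy
        by (simp add: divide_ennreal divide_left_mono ennreal_leI)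
    next
      case top
      then show ?thesis using ry rz rz0 rzy by (simp add: ennreal_top_divide)
    qed
  qed
qed

context setting begin

definition agree :: "nat \<Rightarrow> (nat \<times> nat \<Rightarrow> 's) \<Rightarrow> (nat \<times> nat \<Rightarrow> 's) \<Rightarrow> bool" where "agree n w w' \<longleftrightarrow> (\<forall>j<K. \<forall>t\<in>{1..n}. w' (j, t) = w (j, t))"

lemma agree_mono: "agree n w w' \<Longrightarrow> m \<le> n \<Longrightarrow> agree m w w'"
  by (auto simp: agree_def)

lemma Lk_agree: "agree n w w' \<Longrightarrow> k < K \<Longrightarrow> Lk f k n t w' = Lk f k n t w"
  unfolding Lk_def agree_def by (intro prod.cong) auto

lemma Lsup_agree: "agree n w w' \<Longrightarrow> k < K \<Longrightarrow> Lsup f T k n w' = Lsup f T k n w"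
  unfolding Lsup_def by (simp add: Lk_agree)

lemma Ahat_agree: "agree n w w' \<Longrightarrow> Ahat K Th0 Th1 f n w' = Ahat K Th0 Th1 f n w"
  unfolding Ahat_def by (auto simp: Lsup_agree)

lemma bL_agree: "agree n w w' \<Longrightarrow> bL K f n th' w' = bL K f n th' w"
  unfolding bL_def by (intro prod.cong) (auto simp: Lk_agree)

lemma LL0_agree: "agree n w w' \<Longrightarrow> LL0 K Th0 Th1 f n w' = LL0 K Th0 Th1 f n w"
  unfolding LL0_def using Ahat_agree[of n w w'] bL_agree[of n w w'] by simp

lemma LL1_agree: "agree n w w' \<Longrightarrow> LL1 K Th0 Th1 f n w' = LL1 K Th0 Th1 f n w"
  unfolding LL1_def using Ahat_agree[of n w w'] bL_agree[of n w w'] by simp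

lemma Lhat_agree:
  assumes "agree n w w'" "w \<in> space (Omega K N)" "w' \<in> space (Omega K N)"
  shows "Lhat K f thh n w' = Lhat K f thh n w"
  unfolding Lhat_def
proof (intro prod.cong refl)
  fix s k assume s: "s \<in> {1..n}" and k: "k \<in> {..<K}"
  have "thh k (s - 1) w' = thh k (s - 1) w"
    using assms s k by (intro thh_dep) (auto simp: agree_def)
  moreover have "w' (k, s) = w (k, s)" using assms s k by (auto simp: agree_def)
  ultimately show "f (thh k (s - 1) w') (w' (k, s)) = f (thh k (s - 1) w) (w (k, s))" by simp
qed

lemma stopcond_agree:
  assumes "agree n w w'" "w \<in> space (Omega K N)" "w' \<in> space (Omega K N)"
  shows "stopcond K Th0 Th1 f thh a b n w' = stopcond K Th0 Th1 f thh a b n w"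
  unfolding stopcond_def
  using Lhat_agree[OF assms] LL0_agree[OF assms(1)] LL1_agree[OF assms(1)] by simp

lemma That_agree:
  assumes "agree n w w'" "w \<in> space (Omega K N)" "w' \<in> space (Omega K N)"
  shows "That K Th0 Th1 f thh a b w = enat n \<longleftrightarrow> That K Th0 Th1 f thh a b w' = enat n"
proof -
  have "stopcond K Th0 Th1 f thh a b m w' = stopcond K Th0 Th1 f thh a b m w" if "m \<le> n" for m
    using stopcond_agree[OF agree_mono[OF assms(1) that] assms(2,3)] .
  then have e1: "stopcond K Th0 Th1 f thh a b n w' = stopcond K Th0 Th1 f thh a b n w"
    and e2: "(\<forall>m. 1 \<le> m \<longrightarrow> m < n \<longrightarrow> \<not> stopcond K Th0 Th1 f thh a b m w') \<longleftrightarrow>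
             (\<forall>m. 1 \<le> m \<longrightarrow> m < n \<longrightarrow> \<not> stopcond K Th0 Th1 f thh a b m w)"
    by auto
  show ?thesis by (simp only: That_eq_iff e1 e2)
qed

end

lemma BC_outer:
  assumes M: "prob_space M" and sum: "(\<Sum>n. outer_measure_of M (E n)) < \<infinity>"
    and sub: "\<And>n. E n \<subseteq> space M"
  shows "AE w in M. eventually (\<lambda>n. w \<notin> E n) sequentially"
proof -
  interpret prob_space M by fact
  have "\<forall>n. \<exists>B. B \<in> sets M \<and> E n \<subseteq> B \<and> outer_measure_of M (E n) = emeasure M B"
    using outer_measure_of_attain[OF sub] by blast
  then obtain B where B: "\<And>n. B n \<in> sets M" "\<And>n. E n \<subseteq> B n" "\<And>n. outer_measure_of M (E n) = emeasure M (B n)"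
    by metis
  have "(\<Sum>n. ennreal (measure M (B n))) \<noteq> \<top>"
    using sum B(3) by (simp add: emeasure_eq_measure)
  then have sm: "summable (\<lambda>n. measure M (B n))"
    by (intro summable_suminf_not_top) auto
  have "AE x in M. eventually (\<lambda>n. x \<in> space M - B n) sequentially"
    by (rule borel_cantelli_AE1[OF B(1)]) (auto intro: sm simp: emeasure_eq_measure)
  then show ?thesis
    by (rule eventually_mono) (auto elim!: eventually_mono dest: subsetD[OF B(2)])
qed

lemma ereal_pos_below: "0 < (x::ereal) \<Longrightarrow> \<exists>c. 0 < c \<and> ereal c < x"
  by (metis ereal_less(2) ereal_dense2)

lemma eventually_exp_ge: "0 < (c::real) \<Longrightarrow> eventually (\<lambda>n. b \<le> exp (real (Suc n) * c)) sequentially"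
proof -
  assume c: "0 < c"
  show ?thesis
  proof (rule eventually_sequentiallyI[of "nat \<lceil>b / c\<rceil>"])
    fix n assume n: "nat \<lceil>b / c\<rceil> \<le> n"
    have "b / c \<le> real (Suc n)" using n by linarith
    then have "b \<le> real (Suc n) * c" using c by (simp add: field_simps)
    also have "\<dots> \<le> exp (real (Suc n) * c)" using exp_ge_add_one_self[of "real (Suc n) * c"] by linarith
    finally show "b \<le> exp (real (Suc n) * c)" .
  qed
qed

context fixth begin

lemma AE_That:
  assumes C: "condC K Th0 Th1 N f thh" and Th: "Th0 \<inter> Th1 = {}"
    and sep0: "\<And>t0. t0 \<in> Th0 \<Longrightarrow> (INF t \<in> Th1. KL N f t0 t) > 0"
    and sep1: "\<And>t1. t1 \<in> Th1 \<Longrightarrow> (INF t \<in> Th0. KL N f t1 t) > 0"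
    and a: "a > 0" and b: "b > 0"
  shows "AE w in P. That K Th0 Th1 f thh a b w < \<infinity>"
proof -
  obtain c0 where c0: "0 < c0" "ereal c0 < I0 K Th0 Th1 N f th"
    using ereal_pos_below[OF I0_pos[OF th Th sep0]] by blast
  obtain c1 where c1: "0 < c1" "ereal c1 < I1 K Th0 Th1 N f th"
    using ereal_pos_below[OF I1_pos[OF th Th sep1]] by blast
  define E0 where "E0 n = {w\<in>space P. ennreal (Lhat K f thh (Suc n) w) / LL0 K Th0 Th1 f (Suc n) w
                                     \<le> ennreal (exp (real (Suc n) * c0))}" for n
  define E1 where "E1 n = {w\<in>space P. ennreal (Lhat K f thh (Suc n) w) / LL1 K Th0 Th1 f (Suc n) w
                                     \<le> ennreal (exp (real (Suc n) * c1))}" for n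
  have s0: "(\<Sum>n. outer_measure_of P (E0 n)) < \<infinity>"
    using C th c0 unfolding condC_def E0_def by blast
  have s1: "(\<Sum>n. outer_measure_of P (E1 n)) < \<infinity>"
    using C th c1 unfolding condC_def E1_def by blast
  have ae0: "AE w in P. eventually (\<lambda>n. w \<notin> E0 n) sequentially"
    by (rule BC_outer[OF prob_P s0]) (auto simp: E0_def)
  have ae1: "AE w in P. eventually (\<lambda>n. w \<notin> E1 n) sequentially"
    by (rule BC_outer[OF prob_P s1]) (auto simp: E1_def)
  have ev2: "eventually (\<lambda>n. b \<le> exp (real (Suc n) * c0) \<and> a \<le> exp (real (Suc n) * c1)) sequentially"
    using eventually_exp_ge[OF c0(1), of b] eventually_exp_ge[OF c1(1), of a] by (rule eventually_conj)
  show ?thesis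
    using ae0 ae1 AE_space
  proof eventually_elim
    case (elim w)
    have "eventually (\<lambda>n. (w \<notin> E0 n \<and> w \<notin> E1 n) \<and> (b \<le> exp (real (Suc n) * c0) \<and> a \<le> exp (real (Suc n) * c1))) sequentially"
      using eventually_conj[OF eventually_conj[OF elim(1) elim(2)] ev2] .
    then obtain n where n: "w \<notin> E0 n" "w \<notin> E1 n" "b \<le> exp (real (Suc n) * c0)" "a \<le> exp (real (Suc n) * c1)"
      unfolding eventually_sequentially by auto
    have r0: "ennreal (exp (real (Suc n) * c0)) < ennreal (Lhat K f thh (Suc n) w) / LL0 K Th0 Th1 f (Suc n) w"
      using n(1) elim(3) by (auto simp: E0_def not_le)
    have r1: "ennreal (exp (real (Suc n) * c1)) < ennreal (Lhat K f thh (Suc n) w) / LL1 K Th0 Th1 f (Suc n) w"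
      using n(2) elim(3) by (auto simp: E1_def not_le)
    have "stopcond K Th0 Th1 f thh a b (Suc n) w"
      unfolding stopcond_def
      using order.trans[OF ennreal_leI[OF n(3)] less_imp_le[OF r0]] order.trans[OF ennreal_leI[OF n(4)] less_imp_le[OF r1]]
      by simp
    then have "\<exists>n\<ge>1. stopcond K Th0 Th1 f thh a b n w" by (intro exI[of _ "Suc n"]) auto
    then show ?case by (simp add: That_def)
  qed
qed

lemma bound1:
  assumes a: "a > 0"
  shows "outer_measure_of P {w\<in>space P. That K Th0 Th1 f thh a b w < \<infinity> \<and>
                   Dhat K Th0 Th1 f thh a b w - sigA K Th1 th \<noteq> {}} \<le> ennreal (1 / a)"
proof (rule err_bound[OF a])
  show "{w\<in>space P. That K Th0 Th1 f thh a b w < \<infinity> \<and> Dhat K Th0 Th1 f thh a b w - sigA K Th1 th \<noteq> {}} \<subseteq> space (Omega K N)"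
    using space_P by auto
next
  fix w assume w: "w \<in> {w\<in>space P. That K Th0 Th1 f thh a b w < \<infinity> \<and> Dhat K Th0 Th1 f thh a b w - sigA K Th1 th \<noteq> {}}"
  then have fin: "That K Th0 Th1 f thh a b w < \<infinity>" and D: "Dhat K Th0 Th1 f thh a b w - sigA K Th1 th \<noteq> {}" by auto
  obtain n where n: "That K Th0 Th1 f thh a b w = enat n" "n \<ge> 1" "stopcond K Th0 Th1 f thh a b n w"
    using That_fin[OF fin] by metis
  have "Ahat K Th0 Th1 f n w - sigA K Th1 th \<noteq> {}" using D n(1) by (simp add: Dhat_def)
  then have "ennreal (bL K f n th w) \<le> LL1 K Th0 Th1 f n w"
    unfolding LL1_def using th by (intro SUP_upper) auto
  then have "ennreal (Lhat K f thh n w) / LL1 K Th0 Th1 f n w \<le> ennreal (Lhat K f thh n w) / ennreal (bL K f n th w)"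
    by (rule div_anti)
  moreover have "ennreal a \<le> ennreal (Lhat K f thh n w) / LL1 K Th0 Th1 f n w"
    using n(3) by (simp add: stopcond_def)
  ultimately show "\<exists>n\<ge>1. ennreal a \<le> ennreal (Lhat K f thh n w) / ennreal (bL K f n th w)"
    using n(2) by (intro exI[of _ n]) auto
qed

lemma bound2:
  assumes b: "b > 0"
  shows "outer_measure_of P {w\<in>space P. That K Th0 Th1 f thh a b w < \<infinity> \<and>
                   sigA K Th1 th - Dhat K Th0 Th1 f thh a b w \<noteq> {}} \<le> ennreal (1 / b)"
proof (rule err_bound[OF b])
  show "{w\<in>space P. That K Th0 Th1 f thh a b w < \<infinity> \<and> sigA K Th1 th - Dhat K Th0 Th1 f thh a b w \<noteq> {}} \<subseteq> space (Omega K N)"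
    using space_P by auto
next
  fix w assume w: "w \<in> {w\<in>space P. That K Th0 Th1 f thh a b w < \<infinity> \<and> sigA K Th1 th - Dhat K Th0 Th1 f thh a b w \<noteq> {}}"
  then have fin: "That K Th0 Th1 f thh a b w < \<infinity>" and D: "sigA K Th1 th - Dhat K Th0 Th1 f thh a b w \<noteq> {}" by auto
  obtain n where n: "That K Th0 Th1 f thh a b w = enat n" "n \<ge> 1" "stopcond K Th0 Th1 f thh a b n w"
    using That_fin[OF fin] by metis
  have "sigA K Th1 th - Ahat K Th0 Th1 f n w \<noteq> {}" using D n(1) by (simp add: Dhat_def)
  then have "ennreal (bL K f n th w) \<le> LL0 K Th0 Th1 f n w"
    unfolding LL0_def using th by (intro SUP_upper) auto
  then have "ennreal (Lhat K f thh n w) / LL0 K Th0 Th1 f n w \<le> ennreal (Lhat K f thh n w) / ennreal (bL K f n th w)"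
    by (rule div_anti)
  moreover have "ennreal b \<le> ennreal (Lhat K f thh n w) / LL0 K Th0 Th1 f n w"
    using n(3) by (simp add: stopcond_def)
  ultimately show "\<exists>n\<ge>1. ennreal b \<le> ennreal (Lhat K f thh n w) / ennreal (bL K f n th w)"
    using n(2) by (intro exI[of _ n]) auto
qed

end

theorem theorem2:
  fixes K :: nat and Th0 Th1 :: "'p set" and N :: "'s measure" and Pm :: "'p measure"
    and f :: "'p \<Rightarrow> 's \<Rightarrow> real"
    and thh :: "nat \<Rightarrow> nat \<Rightarrow> (nat \<times> nat \<Rightarrow> 's) \<Rightarrow> 'p"
  assumes K: "K \<ge> 1"
    and Th: "Th0 \<noteq> {}" "Th1 \<noteq> {}" "Th0 \<inter> Th1 = {}"
    and sfin: "sigma_finite_measure N"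
    and dens: "\<And>t. t \<in> Th0 \<union> Th1 \<Longrightarrow> f t \<in> borel_measurable N \<and> (\<forall>x\<in>space N. f t x \<ge> 0)
                       \<and> (\<integral>\<^sup>+ x. ennreal (f t x) \<partial>N) = 1"
    and fmeas: "(\<lambda>(t, x). f t x) \<in> borel_measurable (Pm \<Otimes>\<^sub>M N)"
    and sep0: "\<And>t0. t0 \<in> Th0 \<Longrightarrow> (INF t \<in> Th1. KL N f t0 t) > 0"
    and sep1: "\<And>t1. t1 \<in> Th1 \<Longrightarrow> (INF t \<in> Th0. KL N f t1 t) > 0"
    and mle: "near_mle K Th0 Th1 N Pm f thh"
    and C: "condC K Th0 Th1 N f thh"
  shows "(\<forall>th\<in>bTheta K Th0 Th1. \<forall>a b. a > 0 \<and> b > 0 \<longrightarrow>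
            (AE \<omega> in Pth K N f th. That K Th0 Th1 f thh a b \<omega> < \<infinity>) \<and>
            outer_measure_of (Pth K N f th)
              {\<omega>\<in>space (Pth K N f th). That K Th0 Th1 f thh a b \<omega> < \<infinity> \<and>
                   Dhat K Th0 Th1 f thh a b \<omega> - sigA K Th1 th \<noteq> {}} \<le> ennreal (1 / a) \<and>
            outer_measure_of (Pth K N f th)
              {\<omega>\<in>space (Pth K N f th). That K Th0 Th1 f thh a b \<omega> < \<infinity> \<and>
                   sigA K Th1 th - Dhat K Th0 Th1 f thh a b \<omega> \<noteq> {}} \<le> ennreal (1 / b))
       \<and> (\<forall>\<alpha> \<beta>::real. 0 < \<alpha> \<and> \<alpha> < 1 \<and> 0 < \<beta> \<and> \<beta> < 1 \<longrightarrow>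
            in_Delta K Th0 Th1 N f (That K Th0 Th1 f thh (1 / \<alpha>) (1 / \<beta>))
                                   (Dhat K Th0 Th1 f thh (1 / \<alpha>) (1 / \<beta>)) \<alpha> \<beta>)"
proof -
  interpret setting K Th0 Th1 N Pm f thh
    using dens fmeas mle by unfold_locales auto
  have A: "\<forall>th\<in>bTheta K Th0 Th1. \<forall>a b. a > 0 \<and> b > 0 \<longrightarrow>
            (AE w in Pth K N f th. That K Th0 Th1 f thh a b w < \<infinity>) \<and>
            outer_measure_of (Pth K N f th)
              {w\<in>space (Pth K N f th). That K Th0 Th1 f thh a b w < \<infinity> \<and>
                   Dhat K Th0 Th1 f thh a b w - sigA K Th1 th \<noteq> {}} \<le> ennreal (1 / a) \<and>
            outer_measure_of (Pth K N f th)
              {w\<in>space (Pth K N f th). That K Th0 Th1 f thh a b w < \<infinity> \<and>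
                   sigA K Th1 th - Dhat K Th0 Th1 f thh a b w \<noteq> {}} \<le> ennreal (1 / b)"
  proof (intro ballI allI impI)
    fix th and a b :: real
    assume th: "th \<in> bTheta K Th0 Th1" and ab: "a > 0 \<and> b > 0"
    interpret fixth K Th0 Th1 N Pm f thh th
      using th by unfold_locales
    show "(AE w in Pth K N f th. That K Th0 Th1 f thh a b w < \<infinity>) \<and>
            outer_measure_of (Pth K N f th)
              {w\<in>space (Pth K N f th). That K Th0 Th1 f thh a b w < \<infinity> \<and>
                   Dhat K Th0 Th1 f thh a b w - sigA K Th1 th \<noteq> {}} \<le> ennreal (1 / a) \<and>
            outer_measure_of (Pth K N f th)
              {w\<in>space (Pth K N f th). That K Th0 Th1 f thh a b w < \<infinity> \<and>
                   sigA K Th1 th - Dhat K Th0 Th1 f thh a b w \<noteq> {}} \<le> ennreal (1 / b)"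
      using AE_That[OF C Th(3) sep0 sep1] bound1 bound2 ab by blast
  qed
  have B: "in_Delta K Th0 Th1 N f (That K Th0 Th1 f thh (1 / \<alpha>) (1 / \<beta>))
                                   (Dhat K Th0 Th1 f thh (1 / \<alpha>) (1 / \<beta>)) \<alpha> \<beta>"
    if al: "0 < \<alpha>" and be: "0 < \<beta>" for \<alpha> \<beta> :: real
  proof -
    have i1: "\<forall>w\<in>space (Omega K N). Dhat K Th0 Th1 f thh (1 / \<alpha>) (1 / \<beta>) w \<subseteq> {..<K}"
      by (auto simp: Dhat_def Ahat_def)
    have i2: "\<forall>n. \<forall>w\<in>space (Omega K N). \<forall>w'\<in>space (Omega K N).
        (\<forall>j<K. \<forall>t\<in>{1..n}. w' (j, t) = w (j, t)) \<longrightarrow>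
        (That K Th0 Th1 f thh (1 / \<alpha>) (1 / \<beta>) w = enat n \<longleftrightarrow> That K Th0 Th1 f thh (1 / \<alpha>) (1 / \<beta>) w' = enat n) \<and>
        (That K Th0 Th1 f thh (1 / \<alpha>) (1 / \<beta>) w = enat n \<longrightarrow>
           Dhat K Th0 Th1 f thh (1 / \<alpha>) (1 / \<beta>) w = Dhat K Th0 Th1 f thh (1 / \<alpha>) (1 / \<beta>) w')"
    proof (intro allI ballI impI conjI)
      fix n w w' assume w: "w \<in> space (Omega K N)" and w': "w' \<in> space (Omega K N)"
        and ag0: "\<forall>j<K. \<forall>t\<in>{1..n}. w' (j, t) = w (j, t)"
      have ag: "agree n w w'" using ag0 by (simp add: agree_def)
      show eqT: "That K Th0 Th1 f thh (1 / \<alpha>) (1 / \<beta>) w = enat n \<longleftrightarrow> That K Th0 Th1 f thh (1 / \<alpha>) (1 / \<beta>) w' = enat n"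
        by (rule That_agree[OF ag w w'])
      assume T: "That K Th0 Th1 f thh (1 / \<alpha>) (1 / \<beta>) w = enat n"
      then have T': "That K Th0 Th1 f thh (1 / \<alpha>) (1 / \<beta>) w' = enat n" using eqT by simp
      show "Dhat K Th0 Th1 f thh (1 / \<alpha>) (1 / \<beta>) w = Dhat K Th0 Th1 f thh (1 / \<alpha>) (1 / \<beta>) w'"
        unfolding Dhat_def T T' using Ahat_agree[OF ag] by simp
    qed
    have i3: "\<forall>th\<in>bTheta K Th0 Th1.
       (AE w in Pth K N f th. That K Th0 Th1 f thh (1 / \<alpha>) (1 / \<beta>) w < \<infinity>) \<and>
       outer_measure_of (Pth K N f th)
          {w\<in>space (Pth K N f th). That K Th0 Th1 f thh (1 / \<alpha>) (1 / \<beta>) w < \<infinity> \<and>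
             Dhat K Th0 Th1 f thh (1 / \<alpha>) (1 / \<beta>) w - sigA K Th1 th \<noteq> {}} \<le> ennreal \<alpha> \<and>
       outer_measure_of (Pth K N f th)
          {w\<in>space (Pth K N f th). That K Th0 Th1 f thh (1 / \<alpha>) (1 / \<beta>) w < \<infinity> \<and>
             sigA K Th1 th - Dhat K Th0 Th1 f thh (1 / \<alpha>) (1 / \<beta>) w \<noteq> {}} \<le> ennreal \<beta>"
    proof
      fix th assume th: "th \<in> bTheta K Th0 Th1"
      have p: "1 / \<alpha> > 0" "1 / \<beta> > 0" using al be by auto
      have e: "1 / (1 / \<alpha>) = \<alpha>" "1 / (1 / \<beta>) = \<beta>" by simp_all
      show "(AE w in Pth K N f th. That K Th0 Th1 f thh (1 / \<alpha>) (1 / \<beta>) w < \<infinity>) \<and>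
       outer_measure_of (Pth K N f th)
          {w\<in>space (Pth K N f th). That K Th0 Th1 f thh (1 / \<alpha>) (1 / \<beta>) w < \<infinity> \<and>
             Dhat K Th0 Th1 f thh (1 / \<alpha>) (1 / \<beta>) w - sigA K Th1 th \<noteq> {}} \<le> ennreal \<alpha> \<and>
       outer_measure_of (Pth K N f th)
          {w\<in>space (Pth K N f th). That K Th0 Th1 f thh (1 / \<alpha>) (1 / \<beta>) w < \<infinity> \<and>
             sigA K Th1 th - Dhat K Th0 Th1 f thh (1 / \<alpha>) (1 / \<beta>) w \<noteq> {}} \<le> ennreal \<beta>"
        using A[rule_format, OF th, of "1 / \<alpha>" "1 / \<beta>", OF conjI[OF p], unfolded e] .
    qed
    show ?thesis unfolding in_Delta_def using i1 i2 i3 by blast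
  qed
  show ?thesis using A B by blast
qed


end
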